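(* Let $\mathbf P^w=T^{-1}\big(T_0(\mathbf P_{\boldsymbol\Lambda^{(0)}_w}+\mathbf P_{\boldsymbol\Lambda^{(0)}_s})+\sum_{k\in\mathcal A}T_k(\mathbf P_{\boldsymbol\Lambda^{(k)}_{\mathcal T}}+\mathbf P_{\boldsymbol\Lambda^{(k)}_{\mathcal T^c}})\big)$ with $T=T_0+\sum_{k\in\mathcal A}T_k$, and suppose (A5) of the context holds. Then there is a positive constant $C$ independent of $N$ and $T$ such that $|\lambda_j(\mathbf P^w)-1|\le C\varepsilon$ for all $j\in[s]$, and $\lambda_{s+1}(\mathbf P^w)\le1-\kappa+C\varepsilon$.
   Context: $\mathbf P_{\mathbf A}=\mathbf A(\mathbf A^\top\mathbf A)^{-1}\mathbf A^\top$ denotes orthogonal projection onto the column space of a full-column-rank $\mathbf A$. $\boldsymbol\Lambda^{(0)}_w\in\mathbb R^{N\times s}$ and $\boldsymbol\Lambda^{(0)}_s\in\mathbb R^{N\times(r_0-s)}$ are the weak and strong loading blocks of the target loading matrix, with orthogonal column spaces; for each $k$ in a finite index set $\mathcal A$, $\boldsymbol\Lambda^{(k)}_{\mathcal T}\in\mathbb R^{N\times s}$ and $\boldsymbol\Lambda^{(k)}_{\mathcal T^c}\in\mathbb R^{N\times (r_k-s)}$ are the two column blocks of the source loading matrix $\boldsymbol\Lambda^{(k)}$, with orthogonal column spaces. $T_0,T_k$ are positive sample sizes. $\lambda_j(\cdot)$ is the $j$-th largest eigenvalue, $\|\cdot\|$ spectral norm, $\|\cdot\|_F$ Frobenius norm.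 (A5): $\|\mathbf P_{\boldsymbol\Lambda^{(k)}_{\mathcal T}}-\mathbf P_{\boldsymbol\Lambda^{(0)}_w}\|_F\le\varepsilon$ for all $k\in\mathcal A$, and there is a constant $\kappa>0$ with $T^{-1}\|T_0\mathbf P_{\boldsymbol\Lambda^{(0)}_s}+\sum_{k\in\mathcal A}T_k\mathbf P_{\boldsymbol\Lambda^{(k)}_{\mathcal T^c}}\|\le1-\kappa$. *)

theory Defs
  imports "Jordan_Normal_Form.Gauss_Jordan_Elimination" "Jordan_Normal_Form.DL_Rank"
    "Jordan_Normal_Form.Char_Poly" "HOL-Library.Multiset"
begin

definition full_col_rank :: "real mat \<Rightarrow> bool" where
  "full_col_rank A \<longleftrightarrow> vec_space.rank (dim_row A) A = dim_col A"

definition proj :: "real mat \<Rightarrow> real mat" where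
  "proj A = A * the (mat_inverse (A\<^sup>T * A)) * A\<^sup>T"

definition vnorm :: "real vec \<Rightarrow> real" where
  "vnorm v = sqrt (v \<bullet> v)"

definition spec_norm :: "real mat \<Rightarrow> real" where
  "spec_norm A = Sup {vnorm (A *\<^sub>v v) | v. v \<in> carrier_vec (dim_col A) \<and> vnorm v \<le> 1}"

definition frob_norm :: "real mat \<Rightarrow> real" where
  "frob_norm A = sqrt (\<Sum>i<dim_row A. \<Sum>j<dim_col A. (A $$ (i,j))\<^sup>2)"

definition eigs_desc :: "real mat \<Rightarrow> real list" where
  "eigs_desc A = rev (sorted_list_of_multiset (proots (char_poly A)))"

definition lambda :: "nat \<Rightarrow> real mat \<Rightarrow> real" where
  "lambda j A = eigs_desc A ! (j - 1)"

definition wsum :: "nat \<Rightarrow> 'k set \<Rightarrow> ('k \<Rightarrow> real) \<Rightarrow> ('k \<Rightarrow> real mat) \<Rightarrow> real mat" where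
  "wsum N A c M = mat N N (\<lambda>(i,j). \<Sum>k\<in>A. c k * (M k $$ (i,j)))"

end

theory Submission
  imports Defs "Jordan_Normal_Form.Schur_Decomposition"
begin

lemma cs_sum:
  fixes a b :: "'i \<Rightarrow> real"
  shows "(\<Sum>i\<in>I. a i * b i)\<^sup>2 \<le> (\<Sum>i\<in>I. (a i)\<^sup>2) * (\<Sum>i\<in>I. (b i)\<^sup>2)"
proof -
  have "0 \<le> (\<Sum>i\<in>I. \<Sum>j\<in>I. (a i * b j - a j * b i)\<^sup>2)" by (intro sum_nonneg) auto
  also have "\<dots> = (\<Sum>i\<in>I. \<Sum>j\<in>I. (a i)\<^sup>2 * (b j)\<^sup>2 + (a j)\<^sup>2 * (b i)\<^sup>2 - 2 * ((a i * b i) * (a j * b j)))"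
    by (intro sum.cong refl) (simp add: power2_eq_square algebra_simps)
  also have "\<dots> = (\<Sum>i\<in>I. \<Sum>j\<in>I. (a i)\<^sup>2 * (b j)\<^sup>2) + (\<Sum>i\<in>I. \<Sum>j\<in>I. (a j)\<^sup>2 * (b i)\<^sup>2)
      - 2 * (\<Sum>i\<in>I. \<Sum>j\<in>I. (a i * b i) * (a j * b j))"
    by (simp add: sum.distrib sum_subtractf sum_distrib_left)
  also have "(\<Sum>i\<in>I. \<Sum>j\<in>I. (a i)\<^sup>2 * (b j)\<^sup>2) = (\<Sum>i\<in>I. (a i)\<^sup>2) * (\<Sum>i\<in>I. (b i)\<^sup>2)"
    by (simp add: sum_product)
  also have "(\<Sum>i\<in>I. \<Sum>j\<in>I. (a j)\<^sup>2 * (b i)\<^sup>2) = (\<Sum>i\<in>I. (a i)\<^sup>2) * (\<Sum>i\<in>I. (b i)\<^sup>2)"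
    by (subst sum.swap) (simp add: sum_product mult.commute)
  also have "(\<Sum>i\<in>I. \<Sum>j\<in>I. (a i * b i) * (a j * b j)) = (\<Sum>i\<in>I. a i * b i)\<^sup>2"
    by (simp add: sum_product power2_eq_square)
  finally show ?thesis by simp
qed

lemma cs_sum_abs:
  fixes a b :: "'i \<Rightarrow> real"
  shows "\<bar>\<Sum>i\<in>I. a i * b i\<bar> \<le> sqrt (\<Sum>i\<in>I. (a i)\<^sup>2) * sqrt (\<Sum>i\<in>I. (b i)\<^sup>2)"
proof -
  have "\<bar>\<Sum>i\<in>I. a i * b i\<bar> = sqrt ((\<Sum>i\<in>I. a i * b i)\<^sup>2)" by simp
  also have "\<dots> \<le> sqrt ((\<Sum>i\<in>I. (a i)\<^sup>2) * (\<Sum>i\<in>I. (b i)\<^sup>2))"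
    using cs_sum real_sqrt_le_iff by blast
  also have "\<dots> = sqrt (\<Sum>i\<in>I. (a i)\<^sup>2) * sqrt (\<Sum>i\<in>I. (b i)\<^sup>2)" by (simp add: real_sqrt_mult)
  finally show ?thesis .
qed

lemma sprod_sum: "x \<in> carrier_vec n \<Longrightarrow> y \<in> carrier_vec n \<Longrightarrow> x \<bullet> y = (\<Sum>i<n. x $ i * y $ i)"
  unfolding scalar_prod_def by (auto intro: sum.cong simp: lessThan_atLeast0)

lemma self_sprod_nonneg: "0 \<le> (x::real vec) \<bullet> x"
  by (auto simp: scalar_prod_def intro!: sum_nonneg)

lemma vnorm_sq: "(vnorm x)\<^sup>2 = x \<bullet> x"
  unfolding vnorm_def using self_sprod_nonneg[of x] by simp

lemma vnorm_nonneg: "0 \<le> vnorm x" unfolding vnorm_def using self_sprod_nonneg[of x] by simp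

lemma sprod_self_zero: assumes "(v::real vec) \<bullet> v = 0" "v \<in> carrier_vec m" shows "v = 0\<^sub>v m"
proof -
  have "(\<Sum>i<m. (v$i)\<^sup>2) = 0" using assms sprod_sum[OF assms(2) assms(2)] by (simp add: power2_eq_square)
  hence "\<forall>i\<in>{..<m}. (v$i)\<^sup>2 = 0" by (subst (asm) sum_nonneg_eq_0_iff) auto
  thus ?thesis using assms(2) by (intro eq_vecI) auto
qed

lemma vec_cs:
  assumes "x \<in> carrier_vec n" "y \<in> carrier_vec n"
  shows "\<bar>x \<bullet> y\<bar> \<le> vnorm x * vnorm y"
proof -
  have "\<bar>x \<bullet> y\<bar> = \<bar>\<Sum>i<n. x $ i * y $ i\<bar>" using sprod_sum[OF assms] by simp
  also have "\<dots> \<le> sqrt (\<Sum>i<n. (x $ i)\<^sup>2) * sqrt (\<Sum>i<n. (y $ i)\<^sup>2)" by (rule cs_sum_abs)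
  also have "\<dots> = vnorm x * vnorm y"
    unfolding vnorm_def sprod_sum[OF assms(1) assms(1)] sprod_sum[OF assms(2) assms(2)]
    by (simp add: power2_eq_square)
  finally show ?thesis .
qed

lemma frob_nonneg: "0 \<le> frob_norm M" unfolding frob_norm_def by (auto intro!: sum_nonneg)

lemma mat_vec_frob:
  assumes M: "M \<in> carrier_mat n m" and v: "v \<in> carrier_vec m"
  shows "vnorm (M *\<^sub>v v) \<le> frob_norm M * vnorm v"
proof -
  have c: "M *\<^sub>v v \<in> carrier_vec n" using M v by simp
  have "(M *\<^sub>v v) \<bullet> (M *\<^sub>v v) = (\<Sum>i<n. ((M *\<^sub>v v) $ i)\<^sup>2)"
    using sprod_sum[OF c c] by (simp only: power2_eq_square)
  also have "\<dots> \<le> (\<Sum>i<n. (\<Sum>j<m. (M $$ (i,j))\<^sup>2) * (\<Sum>j<m. (v $ j)\<^sup>2))"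
  proof (intro sum_mono)
    fix i assume "i \<in> {..<n}"
    hence i: "i < n" by auto
    have "(M *\<^sub>v v) $ i = (\<Sum>j<m. M $$ (i,j) * v $ j)"
      using M v i by (simp add: sprod_sum[of _ m])
    thus "((M *\<^sub>v v) $ i)\<^sup>2 \<le> (\<Sum>j<m. (M $$ (i,j))\<^sup>2) * (\<Sum>j<m. (v $ j)\<^sup>2)"
      using cs_sum by simp
  qed
  also have "\<dots> = (frob_norm M)\<^sup>2 * (vnorm v)\<^sup>2"
    unfolding frob_norm_def vnorm_sq using M v
    by (simp add: sum_distrib_right sprod_sum[of v m v] power2_eq_square sum_nonneg)
  finally have "(vnorm (M *\<^sub>v v))\<^sup>2 \<le> (frob_norm M * vnorm v)\<^sup>2"
    by (simp add: vnorm_sq power_mult_distrib)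
  moreover have "0 \<le> frob_norm M * vnorm v" using vnorm_nonneg frob_nonneg by simp
  ultimately show ?thesis using power2_le_imp_le by blast
qed


lemma spec_norm_bound:
  assumes M: "M \<in> carrier_mat n m" and v: "v \<in> carrier_vec m"
  shows "vnorm (M *\<^sub>v v) \<le> spec_norm M * vnorm v"
proof -
  let ?S = "{vnorm (M *\<^sub>v v) | v. v \<in> carrier_vec (dim_col M) \<and> vnorm v \<le> 1}"
  have bdd: "bdd_above ?S"
  proof (rule bdd_aboveI)
    fix x assume "x \<in> ?S"
    then obtain w where x: "x = vnorm (M *\<^sub>v w)" and w: "w \<in> carrier_vec m" "vnorm w \<le> 1" using M by auto
    have "x \<le> frob_norm M * vnorm w" using mat_vec_frob[OF M w(1)] x by simp
    also have "\<dots> \<le> frob_norm M" using w(2) frob_nonneg by (simp add: mult_left_le)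
    finally show "x \<le> frob_norm M" .
  qed
  have mem: "vnorm (M *\<^sub>v w) \<le> spec_norm M" if "w \<in> carrier_vec m" "vnorm w \<le> 1" for w
    unfolding spec_norm_def by (rule cSup_upper[OF _ bdd]) (use that M in auto)
  show ?thesis
  proof (cases "vnorm v = 0")
    case True
    hence "v \<bullet> v = 0" using vnorm_sq[of v] by simp
    hence "v = 0\<^sub>v m" using v by (rule sprod_self_zero)
    moreover have "\<And>k. vnorm (0\<^sub>v k) = 0" by (simp add: vnorm_def)
    moreover have "M *\<^sub>v 0\<^sub>v m = 0\<^sub>v n" by (rule eq_vecI) (use M in auto)
    ultimately show ?thesis using M mem[of "0\<^sub>v m"] True by simp
  next
    case False
    hence pos: "vnorm v > 0" using vnorm_nonneg[of v] by simp
    let ?w = "(1 / vnorm v) \<cdot>\<^sub>v v"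
    have "vnorm ?w = 1"
      using pos unfolding vnorm_def by (simp add: real_sqrt_mult real_sqrt_divide)
    hence "vnorm (M *\<^sub>v ?w) \<le> spec_norm M" using mem v by auto
    moreover have "M *\<^sub>v ?w = (1 / vnorm v) \<cdot>\<^sub>v (M *\<^sub>v v)" using M v by (simp add: mult_mat_vec)
    moreover have "vnorm ((1 / vnorm v) \<cdot>\<^sub>v (M *\<^sub>v v)) = vnorm (M *\<^sub>v v) / vnorm v"
      using pos unfolding vnorm_def by (simp add: real_sqrt_mult real_sqrt_divide)
    ultimately show ?thesis using pos by (simp add: divide_le_eq)
  qed
qed

definition inj_mat :: "real mat \<Rightarrow> bool" where
  "inj_mat A \<longleftrightarrow> (\<forall>c \<in> carrier_vec (dim_col A). A *\<^sub>v c = 0\<^sub>v (dim_row A) \<longrightarrow> c = 0\<^sub>v (dim_col A))"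

lemma mat_vec_zero: "M \<in> carrier_mat n m \<Longrightarrow> M *\<^sub>v 0\<^sub>v m = 0\<^sub>v n"
  by (rule eq_vecI) auto

lemma sprod_mat_sym:
  fixes M :: "real mat"
  assumes M: "M \<in> carrier_mat n n" and s: "M\<^sup>T = M" and x: "x \<in> carrier_vec n" and y: "y \<in> carrier_vec n"
  shows "(M *\<^sub>v x) \<bullet> y = x \<bullet> (M *\<^sub>v y)"
  using transpose_vec_mult_scalar[OF M y x] s comm_scalar_prod[of _ n] M x y
  by (metis mult_mat_vec_carrier)

lemma proj_props:
  assumes A: "A \<in> carrier_mat N r" and inj: "inj_mat A"
  shows "proj A \<in> carrier_mat N N" "(proj A)\<^sup>T = proj A" "proj A * proj A = proj A"
    "proj A * A = A"
    "\<And>x. x \<in> carrier_vec N \<Longrightarrow> A\<^sup>T *\<^sub>v x = 0\<^sub>v r \<Longrightarrow> proj A *\<^sub>v x = 0\<^sub>v N"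
    "\<exists>B. B \<in> carrier_mat r r \<and> proj A = A * B * A\<^sup>T \<and> B * (A\<^sup>T * A) = 1\<^sub>m r \<and> B\<^sup>T = B"
proof -
  define G where "G = A\<^sup>T * A"
  have G: "G \<in> carrier_mat r r" unfolding G_def using A by simp
  have Ginj: "c = 0\<^sub>v r" if c: "c \<in> carrier_vec r" "G *\<^sub>v c = 0\<^sub>v r" for c
  proof -
    have "(A *\<^sub>v c) \<bullet> (A *\<^sub>v c) = c \<bullet> (G *\<^sub>v c)"
      unfolding G_def using A c transpose_vec_mult_scalar[of A N r c "A *\<^sub>v c"]
      by (simp add: assoc_mult_mat_vec comm_scalar_prod[of _ r])
    also have "\<dots> = 0" using c by simp
    finally have "A *\<^sub>v c = 0\<^sub>v N" using sprod_self_zero A c by simp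
    thus ?thesis using inj A c unfolding inj_mat_def by auto
  qed
  have "det G \<noteq> 0" using det_0_iff_vec_prod_zero_field[OF G] Ginj by auto
  hence unit: "G \<in> Units (ring_mat TYPE(real) r ())" by (rule det_non_zero_imp_unit[OF G])
  obtain B where MB: "mat_inverse G = Some B"
    using mat_inverse(1)[OF G, of "()"] unit by (cases "mat_inverse G") auto
  from mat_inverse(2)[OF G MB] have GB: "G * B = 1\<^sub>m r" "B * G = 1\<^sub>m r" and B: "B \<in> carrier_mat r r" by auto
  have pA: "proj A = A * B * A\<^sup>T" unfolding proj_def G_def[symmetric] MB by simp
  have GT: "G\<^sup>T = G" unfolding G_def using A by (simp add: transpose_mult)
  have BT: "B\<^sup>T = B"
  proof -
    have "B\<^sup>T * G = 1\<^sub>m r" using transpose_mult[OF G B] GB GT by simp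
    hence "B\<^sup>T * G * B = B" using B by simp
    moreover have "B\<^sup>T * G * B = B\<^sup>T" using GB B G by (simp add: assoc_mult_mat[of _ r r])
    ultimately show ?thesis by simp
  qed
  show P: "proj A \<in> carrier_mat N N" unfolding pA using A B by simp
  show "(proj A)\<^sup>T = proj A"
  proof -
    have "(A * B * A\<^sup>T)\<^sup>T = (A\<^sup>T)\<^sup>T * (A * B)\<^sup>T" using A B by (intro transpose_mult) auto
    also have "(A * B)\<^sup>T = B\<^sup>T * A\<^sup>T" using A B by (intro transpose_mult) auto
    finally have "(A * B * A\<^sup>T)\<^sup>T = A * (B * A\<^sup>T)" using BT by simp
    thus ?thesis unfolding pA using A B by (simp add: assoc_mult_mat[of _ N r])
  qed
  show PA: "proj A * A = A"
  proof -
    have "A * B * A\<^sup>T * A = A * (B * A\<^sup>T) * A" using A B by (simp add: assoc_mult_mat[of A N r B r _ N])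
    also have "\<dots> = A * ((B * A\<^sup>T) * A)" using A B by (intro assoc_mult_mat[of _ N r _ N _ r]) auto
    also have "(B * A\<^sup>T) * A = B * (A\<^sup>T * A)" using A B by (intro assoc_mult_mat[of _ r r _ N _ r]) auto
    finally have "A * B * A\<^sup>T * A = A * (B * (A\<^sup>T * A))" .
    also have "\<dots> = A" using GB A unfolding G_def by simp
    finally show ?thesis unfolding pA .
  qed
  show "proj A * proj A = proj A"
  proof -
    have e1: "proj A = A * (B * A\<^sup>T)" unfolding pA using A B by (intro assoc_mult_mat[of _ N r _ r _ N]) auto
    have "proj A * proj A = proj A * (A * (B * A\<^sup>T))" using e1 by simp
    also have "\<dots> = (proj A * A) * (B * A\<^sup>T)" using A B P by (intro assoc_mult_mat[symmetric, of _ N N _ r _ N]) auto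
    finally show ?thesis using PA e1 by simp
  qed
  show "proj A *\<^sub>v x = 0\<^sub>v N" if "x \<in> carrier_vec N" "A\<^sup>T *\<^sub>v x = 0\<^sub>v r" for x
  proof -
    have "A * B * A\<^sup>T *\<^sub>v x = (A * B) *\<^sub>v (A\<^sup>T *\<^sub>v x)" by (rule assoc_mult_mat_vec) (use A B that in auto)
    also have "\<dots> = 0\<^sub>v N" using that(2) A B by (simp add: mat_vec_zero[of _ N r])
    finally show ?thesis unfolding pA .
  qed
  show "\<exists>B. B \<in> carrier_mat r r \<and> proj A = A * B * A\<^sup>T \<and> B * (A\<^sup>T * A) = 1\<^sub>m r \<and> B\<^sup>T = B"
    using B pA GB BT G_def by blast
qed

lemma fcr_inj:
  assumes A: "A \<in> carrier_mat n nc" and f: "full_col_rank A"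
  shows "inj_mat A"
proof -
  interpret V: vec_space "TYPE(real)" n .
  have rk: "V.rank A = nc" using f A unfolding full_col_rank_def by simp
  show ?thesis unfolding inj_mat_def
  proof (intro ballI impI, rule ccontr)
    fix c assume c: "c \<in> carrier_vec (dim_col A)" "A *\<^sub>v c = 0\<^sub>v (dim_row A)" "c \<noteq> 0\<^sub>v (dim_col A)"
    show False
    proof (cases "distinct (cols A)")
      case True
      then have "V.lin_indpt (set (cols A))" using V.full_rank_lin_indpt[OF A rk] by auto
      moreover have "V.lin_dep (set (cols A))" using V.lin_depI[OF A _ _ _ True] c A by auto
      ultimately show False by simp
    next
      case False
      obtain S where S: "maximal S (\<lambda>T. T \<subseteq> set (cols A) \<and> V.lin_indpt T)"
        using maximal_exists[of "(\<lambda>T. T \<subseteq> set (cols A) \<and> V.lin_indpt T)" "card (set (cols A))" "{}"]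
        by (meson List.finite_set card_mono empty_iff empty_subsetI V.finite_lin_indpt2 rev_finite_subset)
      then have "card S \<le> card (set (cols A))" by (simp add: card_mono maximal_def)
      moreover have "card (set (cols A)) < nc"
        using False A card_distinct[of "cols A"] card_length[of "cols A"]
        by (cases "card (set (cols A)) = nc") auto
      ultimately have "card S < nc" by simp
      then show False using V.rank_card_indpt[OF A S] rk by simp
    qed
  qed
qed

lemma inj_block:
  assumes L1: "L1 \<in> carrier_mat N a" and L2: "L2 \<in> carrier_mat N b"
    and inj: "inj_mat (four_block_mat L1 L2 (0\<^sub>m 0 a) (0\<^sub>m 0 b))"
  shows "inj_mat L1" "inj_mat L2"
proof -
  let ?F = "four_block_mat L1 L2 (0\<^sub>m 0 a) (0\<^sub>m 0 b)"
  have F: "?F \<in> carrier_mat N (a + b)" using L1 L2 by auto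
  have Finj: "c = 0\<^sub>v (a + b)" if "c \<in> carrier_vec (a+b)" "?F *\<^sub>v c = 0\<^sub>v N" for c
    using inj F that L1 L2 unfolding inj_mat_def by auto
  have z0: "u @\<^sub>v (v :: real vec) = 0\<^sub>v N" if "u = 0\<^sub>v N" "dim_vec v = 0" for u v
    using that by (intro eq_vecI) auto
  show "inj_mat L1" unfolding inj_mat_def
  proof (intro ballI impI)
    fix c assume c: "c \<in> carrier_vec (dim_col L1)" "L1 *\<^sub>v c = 0\<^sub>v (dim_row L1)"
    have "?F *\<^sub>v (c @\<^sub>v 0\<^sub>v b) = (L1 *\<^sub>v c + L2 *\<^sub>v 0\<^sub>v b) @\<^sub>v (0\<^sub>m 0 a *\<^sub>v c + 0\<^sub>m 0 b *\<^sub>v 0\<^sub>v b)"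
      using L1 L2 c by (intro four_block_mat_mult_vec) auto
    also have "\<dots> = 0\<^sub>v N" using c L1 L2 by (intro z0) (auto simp: mat_vec_zero[of _ N])
    finally have "c @\<^sub>v 0\<^sub>v b = 0\<^sub>v (a+b)" using c L1 by (intro Finj) auto
    hence "\<And>i. i < a \<Longrightarrow> c $ i = 0" using c L1
      by (metis add.right_neutral index_append_vec(1) index_zero_vec(1) carrier_matD(2) carrier_vecD
          dim_vec index_zero_vec(2) trans_less_add1)
    thus "c = 0\<^sub>v (dim_col L1)" using c L1 by (intro eq_vecI) auto
  qed
  show "inj_mat L2" unfolding inj_mat_def
  proof (intro ballI impI)
    fix c assume c: "c \<in> carrier_vec (dim_col L2)" "L2 *\<^sub>v c = 0\<^sub>v (dim_row L2)"
    have "?F *\<^sub>v (0\<^sub>v a @\<^sub>v c) = (L1 *\<^sub>v 0\<^sub>v a + L2 *\<^sub>v c) @\<^sub>v (0\<^sub>m 0 a *\<^sub>v 0\<^sub>v a + 0\<^sub>m 0 b *\<^sub>v c)"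
      using L1 L2 c by (intro four_block_mat_mult_vec) auto
    also have "\<dots> = 0\<^sub>v N" using c L1 L2 by (intro z0) (auto simp: mat_vec_zero[of _ N])
    finally have e: "0\<^sub>v a @\<^sub>v c = 0\<^sub>v (a+b)" using c L2 by (intro Finj) auto
    have "c $ i = 0" if i: "i < b" for i
    proof -
      have "(0\<^sub>v a @\<^sub>v c) $ (a + i) = 0" using e i by simp
      thus ?thesis using c L2 i by simp
    qed
    thus "c = 0\<^sub>v (dim_col L2)" using c L2 by (intro eq_vecI) auto
  qed
qed

lemma proj_orth:
  assumes L1: "L1 \<in> carrier_mat N a" and L2: "L2 \<in> carrier_mat N b"
    and i1: "inj_mat L1" and i2: "inj_mat L2" and o: "L1\<^sup>T * L2 = 0\<^sub>m a b"
  shows "proj L1 * proj L2 = 0\<^sub>m N N"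
proof -
  obtain B1 where B1: "B1 \<in> carrier_mat a a" "proj L1 = L1 * B1 * L1\<^sup>T" using proj_props(6)[OF L1 i1] by blast
  obtain B2 where B2: "B2 \<in> carrier_mat b b" "proj L2 = L2 * B2 * L2\<^sup>T" using proj_props(6)[OF L2 i2] by blast
  have e1: "proj L1 = (L1 * B1) * L1\<^sup>T" using B1 by simp
  have e2: "proj L2 = L2 * (B2 * L2\<^sup>T)" unfolding B2(2) using L2 B2(1) by (intro assoc_mult_mat[of _ N b _ b _ N]) auto
  have "proj L1 * proj L2 = (L1 * B1) * (L1\<^sup>T * (L2 * (B2 * L2\<^sup>T)))"
    unfolding e1 e2 using L1 L2 B1(1) B2(1) by (intro assoc_mult_mat[of _ N a _ N _ N]) auto
  also have "L1\<^sup>T * (L2 * (B2 * L2\<^sup>T)) = (L1\<^sup>T * L2) * (B2 * L2\<^sup>T)"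
    using L1 L2 B2(1) by (intro assoc_mult_mat[symmetric, of _ a N _ b _ N]) auto
  also have "\<dots> = 0\<^sub>m a N" unfolding o using L2 B2(1) by simp
  also have "(L1 * B1) * 0\<^sub>m a N = 0\<^sub>m N N" using L1 B1(1) by simp
  finally show ?thesis .
qed

lemma idem_bounds:
  fixes S :: "real mat"
  assumes S: "S \<in> carrier_mat n n" and sym: "S\<^sup>T = S" and idem: "S * S = S" and x: "x \<in> carrier_vec n"
  shows "0 \<le> x \<bullet> (S *\<^sub>v x)" "x \<bullet> (S *\<^sub>v x) \<le> x \<bullet> x"
proof -
  have Sx: "S *\<^sub>v x \<in> carrier_vec n" using S x by simp
  have e: "x \<bullet> (S *\<^sub>v x) = (S *\<^sub>v x) \<bullet> (S *\<^sub>v x)"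
  proof -
    have "x \<bullet> (S *\<^sub>v x) = x \<bullet> (S *\<^sub>v (S *\<^sub>v x))" using idem S x by (metis assoc_mult_mat_vec)
    also have "\<dots> = (S *\<^sub>v x) \<bullet> (S *\<^sub>v x)" using sprod_mat_sym[OF S sym x Sx] by simp
    finally show ?thesis .
  qed
  thus "0 \<le> x \<bullet> (S *\<^sub>v x)" using self_sprod_nonneg by simp
  have "0 \<le> (x - S *\<^sub>v x) \<bullet> (x - S *\<^sub>v x)" by (rule self_sprod_nonneg)
  also have "(x - S *\<^sub>v x) \<bullet> (x - S *\<^sub>v x) = x \<bullet> x - 2 * (x \<bullet> (S *\<^sub>v x)) + (S *\<^sub>v x) \<bullet> (S *\<^sub>v x)"
    using x Sx by (simp add: scalar_prod_minus_distrib minus_scalar_prod_distrib comm_scalar_prod[of "S *\<^sub>v x" n x] algebra_simps)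
  finally show "x \<bullet> (S *\<^sub>v x) \<le> x \<bullet> x" using e by simp
qed

lemma sym_entry: "A\<^sup>T = A \<Longrightarrow> A \<in> carrier_mat n n \<Longrightarrow> i < n \<Longrightarrow> j < n \<Longrightarrow> A $$ (i,j) = A $$ (j,i)"
  by (metis carrier_matD index_transpose_mat(1))

lemma real_sym_eigen:
  fixes A :: "real mat"
  assumes A: "A \<in> carrier_mat n n" and sym: "A\<^sup>T = A" and n: "n > 0"
  shows "\<exists>e v. v \<in> carrier_vec n \<and> v \<noteq> 0\<^sub>v n \<and> A *\<^sub>v v = e \<cdot>\<^sub>v v"
proof -
  define Ac where "Ac = map_mat complex_of_real A"
  have Ac: "Ac \<in> carrier_mat n n" unfolding Ac_def using A by simp
  obtain as where cp: "char_poly Ac = (\<Prod>a\<leftarrow>as. [:- a, 1:])" and len: "length as = n"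
    using char_poly_factorized[OF Ac] by blast
  obtain a rest where as: "as = a # rest" using len n by (cases as) auto
  have "poly (char_poly Ac) a = 0" unfolding cp as by simp
  hence "eigenvalue Ac a" using eigenvalue_root_char_poly[OF Ac] by simp
  then obtain v where v: "v \<in> carrier_vec n" "v \<noteq> 0\<^sub>v n" "Ac *\<^sub>v v = a \<cdot>\<^sub>v v"
    unfolding eigenvalue_def eigenvector_def using Ac by auto
  have Avi: "(Ac *\<^sub>v v) $ i = (\<Sum>j<n. complex_of_real (A $$ (i,j)) * v $ j)" if "i < n" for i
    using that Ac A v(1) unfolding Ac_def by (auto simp: scalar_prod_def lessThan_atLeast0 intro!: sum.cong)
  have av: "(Ac *\<^sub>v v) $ i = a * v $ i" if "i < n" for i using v that by simp
  define S where "S = (\<Sum>i<n. cnj (v$i) * (Ac *\<^sub>v v) $ i)"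
  define w where "w = (\<Sum>i<n. (cmod (v$i))\<^sup>2)"
  have S1: "S = a * complex_of_real w"
  proof -
    have "S = (\<Sum>i<n. a * (cnj (v$i) * v$i))" unfolding S_def by (intro sum.cong) (auto simp: av)
    also have "\<dots> = a * complex_of_real w" unfolding w_def
      by (simp add: sum_distrib_left complex_norm_square mult.commute del: of_real_power)
    finally show ?thesis .
  qed
  have S2: "S = (\<Sum>i<n. \<Sum>j<n. complex_of_real (A $$ (i,j)) * (cnj (v$i) * v$j))"
    unfolding S_def by (intro sum.cong refl) (auto simp: Avi sum_distrib_left mult.commute mult.left_commute)
  have "cnj S = (\<Sum>i<n. \<Sum>j<n. complex_of_real (A $$ (i,j)) * (v$i * cnj (v$j)))"
    unfolding S2 by (simp add: cnj_sum)
  also have "\<dots> = (\<Sum>j<n. \<Sum>i<n. complex_of_real (A $$ (i,j)) * (v$i * cnj (v$j)))"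
    by (rule sum.swap)
  also have "\<dots> = (\<Sum>j<n. \<Sum>i<n. complex_of_real (A $$ (j,i)) * (cnj (v$j) * v$i))"
    by (intro sum.cong refl) (auto simp: sym_entry[OF sym A] mult.commute)
  also have "\<dots> = S" unfolding S2 ..
  finally have "cnj S = S" .
  hence "Im (cnj S) = Im S" by simp
  hence "Im S = 0" by simp
  hence imw: "Im a * w = 0" unfolding S1 by simp
  obtain k where k: "k < n" "v $ k \<noteq> 0" using v by (metis eq_vecI carrier_vecD index_zero_vec)
  have "0 < (cmod (v$k))\<^sup>2" using k by simp
  also have "\<dots> \<le> w" unfolding w_def using k by (intro member_le_sum) auto
  finally have "Im a = 0" using imw by simp
  define e where "e = Re a"
  have ae: "a = complex_of_real e" using \<open>Im a = 0\<close> unfolding e_def by (simp add: complex_eq_iff)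
  define x where "x = vec n (\<lambda>i. Re (v $ i))"
  define y where "y = vec n (\<lambda>i. Im (v $ i))"
  have Ax: "A *\<^sub>v x = e \<cdot>\<^sub>v x"
  proof (rule eq_vecI)
    fix i assume "i < dim_vec (e \<cdot>\<^sub>v x)"
    hence i: "i < n" unfolding x_def by simp
    have "(A *\<^sub>v x) $ i = (\<Sum>j<n. A $$ (i,j) * Re (v $ j))"
      using i A unfolding x_def by (auto simp: scalar_prod_def lessThan_atLeast0 intro!: sum.cong)
    also have "\<dots> = Re ((Ac *\<^sub>v v) $ i)" unfolding Avi[OF i] by (simp add: Re_sum)
    also have "\<dots> = e * Re (v $ i)" unfolding av[OF i] ae by simp
    finally show "(A *\<^sub>v x) $ i = (e \<cdot>\<^sub>v x) $ i" using i unfolding x_def by simp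
  qed (use A in \<open>simp add: x_def\<close>)
  have Ay: "A *\<^sub>v y = e \<cdot>\<^sub>v y"
  proof (rule eq_vecI)
    fix i assume "i < dim_vec (e \<cdot>\<^sub>v y)"
    hence i: "i < n" unfolding y_def by simp
    have "(A *\<^sub>v y) $ i = (\<Sum>j<n. A $$ (i,j) * Im (v $ j))"
      using i A unfolding y_def by (auto simp: scalar_prod_def lessThan_atLeast0 intro!: sum.cong)
    also have "\<dots> = Im ((Ac *\<^sub>v v) $ i)" unfolding Avi[OF i] by (simp add: Im_sum)
    also have "\<dots> = e * Im (v $ i)" unfolding av[OF i] ae by simp
    finally show "(A *\<^sub>v y) $ i = (e \<cdot>\<^sub>v y) $ i" using i unfolding y_def by simp
  qed (use A in \<open>simp add: y_def\<close>)
  have "x \<noteq> 0\<^sub>v n \<or> y \<noteq> 0\<^sub>v n"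
  proof (rule ccontr)
    assume "\<not> ?thesis"
    hence "x $ k = 0" "y $ k = 0" using k by auto
    hence "v $ k = 0" using k unfolding x_def y_def by (simp add: complex_eq_iff)
    thus False using k by simp
  qed
  moreover have "x \<in> carrier_vec n" "y \<in> carrier_vec n" unfolding x_def y_def by auto
  ultimately show ?thesis using Ax Ay by blast
qed

lemma orth_complete:
  fixes v :: "real vec"
  assumes v: "v \<in> carrier_vec n" and v1: "v \<bullet> v = 1"
  shows "\<exists>W. W \<in> carrier_mat n n \<and> W\<^sup>T * W = 1\<^sub>m n \<and> col W 0 = v"
proof -
  interpret C: cof_vec_space n "TYPE(real)" .
  have v0: "v \<noteq> 0\<^sub>v n" using v1 v by auto
  define bs where "bs = basis_completion v"
  note bc = C.basis_completion[OF v v0, folded bs_def]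
  define ws where "ws = gram_schmidt n bs"
  note gs = C.gram_schmidt_result[OF bc(2) bc(4) bc(5) ws_def]
  have lws: "length ws = n" using gs(4) bc(6) by simp
  have n: "n > 0" using v v0 by (cases n) auto
  have bsv: "bs = v # tl bs" using bc(6) bc(7) n by (cases bs) auto
  have hws: "hd ws = v" unfolding ws_def using v by (subst bsv) simp
  have ws0: "ws ! 0 = v" using hws lws n by (cases ws) auto
  have wsc: "ws ! i \<in> carrier_vec n" if "i < n" for i using gs(3) lws that by auto
  have orth: "ws ! i \<bullet> ws ! j = 0 \<longleftrightarrow> i \<noteq> j" if "i < n" "j < n" for i j
    using corthogonalD[OF gs(2), of i j] that lws by simp
  define us where "us = map (\<lambda>w. (1 / vnorm w) \<cdot>\<^sub>v w) ws"
  have lus: "length us = n" unfolding us_def using lws by simp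
  have usc: "us ! i \<in> carrier_vec n" if "i < n" for i unfolding us_def using wsc that lws by simp
  have usi: "us ! i = (1 / vnorm (ws ! i)) \<cdot>\<^sub>v ws ! i" if "i < n" for i unfolding us_def using that lws by simp
  have uorth: "us ! i \<bullet> us ! j = (if i = j then 1 else 0)" if ij: "i < n" "j < n" for i j
  proof -
    have "us ! i \<bullet> us ! j = (1 / vnorm (ws ! i)) * (1 / vnorm (ws ! j)) * (ws ! i \<bullet> ws ! j)"
      unfolding usi[OF ij(1)] usi[OF ij(2)] using wsc[OF ij(1)] wsc[OF ij(2)] by simp
    also have "\<dots> = (if i = j then 1 else 0)"
    proof (cases "i = j")
      case True
      have "ws ! i \<bullet> ws ! i \<noteq> 0" using orth[OF ij(1) ij(1)] by simp
      moreover have "vnorm (ws ! i) * vnorm (ws ! i) = ws ! i \<bullet> ws ! i" using vnorm_sq[of "ws ! i"] by (simp add: power2_eq_square)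
      ultimately show ?thesis using True by (simp add: field_simps)
    next
      case False thus ?thesis using orth[OF ij] by simp
    qed
    finally show ?thesis .
  qed
  define W where "W = mat_of_cols n us"
  have W: "W \<in> carrier_mat n n" unfolding W_def using mat_of_cols_carrier(1)[of n us] lus by metis
  have colW: "col W j = us ! j" if "j < n" for j unfolding W_def using that lus usc by simp
  have "W\<^sup>T * W = 1\<^sub>m n"
  proof (rule eq_matI)
    fix i j assume "i < dim_row (1\<^sub>m n)" "j < dim_col (1\<^sub>m n)"
    hence ij: "i < n" "j < n" by auto
    have "(W\<^sup>T * W) $$ (i,j) = col W i \<bullet> col W j" using W ij by simp
    also have "\<dots> = 1\<^sub>m n $$ (i,j)" using colW ij uorth by simp
    finally show "(W\<^sup>T * W) $$ (i,j) = 1\<^sub>m n $$ (i,j)" .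
  qed (use W in auto)
  moreover have "col W 0 = v"
  proof -
    have "vnorm v = 1" unfolding vnorm_def using v1 by simp
    thus ?thesis using colW[OF n] usi[OF n] ws0 by simp
  qed
  ultimately show ?thesis using W by blast
qed

definition diagm :: "real list \<Rightarrow> real mat" where
  "diagm es = mat (length es) (length es) (\<lambda>(i,j). if i = j then es ! i else 0)"

lemma bd_mult:
  fixes X1 :: "real mat"
  assumes "X1 \<in> carrier_mat a k" "Y1 \<in> carrier_mat b l" "X2 \<in> carrier_mat k c" "Y2 \<in> carrier_mat l d"
  shows "four_block_mat X1 (0\<^sub>m a l) (0\<^sub>m b k) Y1 * four_block_mat X2 (0\<^sub>m k d) (0\<^sub>m l c) Y2
     = four_block_mat (X1 * X2) (0\<^sub>m a d) (0\<^sub>m b c) (Y1 * Y2)"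
  by (subst mult_four_block_mat[of _ a k _ l _ b]) (use assms in auto)

lemma bd_transpose:
  fixes X :: "real mat"
  assumes "X \<in> carrier_mat a k" "Y \<in> carrier_mat b l"
  shows "(four_block_mat X (0\<^sub>m a l) (0\<^sub>m b k) Y)\<^sup>T = four_block_mat X\<^sup>T (0\<^sub>m k b) (0\<^sub>m l a) Y\<^sup>T"
  using transpose_four_block_mat[of X a k "0\<^sub>m a l" l "0\<^sub>m b k" b Y] assms by simp

lemma spectral:
  fixes A :: "real mat"
  assumes "A \<in> carrier_mat n n" "A\<^sup>T = A"
  shows "\<exists>Q es. Q \<in> carrier_mat n n \<and> Q\<^sup>T * Q = 1\<^sub>m n \<and> length es = n \<and> Q\<^sup>T * A * Q = diagm es"
  using assms
proof (induction n arbitrary: A)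
  case 0
  have "(1\<^sub>m 0)\<^sup>T * A * 1\<^sub>m 0 = diagm []" using 0 by (intro eq_matI) (auto simp: diagm_def)
  moreover have "(1\<^sub>m 0 :: real mat)\<^sup>T * 1\<^sub>m 0 = 1\<^sub>m 0" by (intro eq_matI) auto
  ultimately show ?case by (intro exI[of _ "1\<^sub>m 0"] exI[of _ "[]"]) auto
next
  case (Suc m)
  let ?n = "Suc m"
  have A: "A \<in> carrier_mat ?n ?n" and sym: "A\<^sup>T = A" using Suc by auto
  obtain e v0 where v0: "v0 \<in> carrier_vec ?n" "v0 \<noteq> 0\<^sub>v ?n" "A *\<^sub>v v0 = e \<cdot>\<^sub>v v0"
    using real_sym_eigen[OF A sym] by auto
  have "v0 \<bullet> v0 \<noteq> 0" using sprod_self_zero v0 by blast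
  hence vpos: "vnorm v0 > 0" unfolding vnorm_def using self_sprod_nonneg[of v0] by simp
  define v where "v = (1 / vnorm v0) \<cdot>\<^sub>v v0"
  have v: "v \<in> carrier_vec ?n" unfolding v_def using v0 by simp
  have v1: "v \<bullet> v = 1" unfolding v_def using v0 vpos vnorm_sq[of v0] \<open>v0 \<bullet> v0 \<noteq> 0\<close>
    by (simp add: power2_eq_square field_simps)
  have Av: "A *\<^sub>v v = e \<cdot>\<^sub>v v" unfolding v_def using v0 A
    by (simp add: mult_mat_vec smult_smult_assoc mult.commute)
  obtain W where W: "W \<in> carrier_mat ?n ?n" "W\<^sup>T * W = 1\<^sub>m ?n" "col W 0 = v"
    using orth_complete[OF v v1] by blast
  define B where "B = W\<^sup>T * A * W"
  have B: "B \<in> carrier_mat ?n ?n" unfolding B_def using W A by simp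
  have BT: "B\<^sup>T = B"
  proof -
    have "B\<^sup>T = W\<^sup>T * (W\<^sup>T * A)\<^sup>T" unfolding B_def using W A by (intro transpose_mult) auto
    also have "(W\<^sup>T * A)\<^sup>T = A\<^sup>T * W" using W A by (subst transpose_mult) auto
    finally show ?thesis unfolding B_def using sym W A by (simp add: assoc_mult_mat[of _ ?n ?n])
  qed
  have Bi0: "B $$ (i, 0) = (if i = 0 then e else 0)" if i: "i < ?n" for i
  proof -
    have "B = W\<^sup>T * (A * W)" unfolding B_def using W A by (intro assoc_mult_mat) auto
    hence "B $$ (i, 0) = row W\<^sup>T i \<bullet> col (A * W) 0" using W A i by simp
    also have "col (A * W) 0 = A *\<^sub>v col W 0" using W A by (intro col_mult2) auto
    also have "row W\<^sup>T i = col W i" using W i by simp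
    also have "col W i \<bullet> (A *\<^sub>v col W 0) = e * (col W i \<bullet> col W 0)" unfolding W(3) Av using W v i by simp
    also have "col W i \<bullet> col W 0 = (W\<^sup>T * W) $$ (i, 0)" using W(1) i by simp
    also have "\<dots> = (if i = 0 then 1 else 0)" unfolding W(2) using i by simp
    finally show ?thesis by simp
  qed
  have B0j: "B $$ (0, j) = (if j = 0 then e else 0)" if j: "j < ?n" for j
    using Bi0[OF j] sym_entry[OF BT B j] by simp
  define B4 where "B4 = mat m m (\<lambda>(i,j). B $$ (Suc i, Suc j))"
  have B4: "B4 \<in> carrier_mat m m" unfolding B4_def by simp
  have B4T: "B4\<^sup>T = B4" unfolding B4_def using sym_entry[OF BT B] by (intro eq_matI) auto
  obtain Q' es' where Q': "Q' \<in> carrier_mat m m" "Q'\<^sup>T * Q' = 1\<^sub>m m" "length es' = m" "Q'\<^sup>T * B4 * Q' = diagm es'"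
    using Suc.IH[OF B4 B4T] by blast
  define E where "E = (mat 1 1 (\<lambda>_. e) :: real mat)"
  have E: "E \<in> carrier_mat 1 1" unfolding E_def by simp
  have Bblock: "B = four_block_mat E (0\<^sub>m 1 m) (0\<^sub>m m 1) B4"
  proof (rule eq_matI)
    fix i j assume "i < dim_row (four_block_mat E (0\<^sub>m 1 m) (0\<^sub>m m 1) B4)"
      "j < dim_col (four_block_mat E (0\<^sub>m 1 m) (0\<^sub>m m 1) B4)"
    hence ij: "i < ?n" "j < ?n" using E B4 by auto
    show "B $$ (i, j) = four_block_mat E (0\<^sub>m 1 m) (0\<^sub>m m 1) B4 $$ (i, j)"
      using ij E B4 Bi0 B0j unfolding B4_def E_def
      by (cases i; cases j) auto
  qed (use B E B4 in auto)
  define F where "F = four_block_mat (1\<^sub>m 1) (0\<^sub>m 1 m) (0\<^sub>m m 1) Q'"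
  have F: "F \<in> carrier_mat ?n ?n" unfolding F_def using Q' by (metis four_block_carrier_mat one_carrier_mat plus_1_eq_Suc)
  have FT: "F\<^sup>T = four_block_mat (1\<^sub>m 1) (0\<^sub>m 1 m) (0\<^sub>m m 1) Q'\<^sup>T"
    unfolding F_def using Q' by (subst bd_transpose[of _ 1 1 _ m m]) auto
  define Q where "Q = W * F"
  have Q: "Q \<in> carrier_mat ?n ?n" unfolding Q_def using W F by simp
  have QT: "Q\<^sup>T = F\<^sup>T * W\<^sup>T" unfolding Q_def using W F by (intro transpose_mult) auto
  have FTF: "F\<^sup>T * F = 1\<^sub>m ?n"
  proof -
    have "F\<^sup>T * F = four_block_mat (1\<^sub>m 1 * 1\<^sub>m 1) (0\<^sub>m 1 m) (0\<^sub>m m 1) (Q'\<^sup>T * Q')"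
      unfolding FT unfolding F_def using Q' by (intro bd_mult[of _ 1 1 _ m m]) auto
    also have "\<dots> = 1\<^sub>m ?n" using Q' by simp
    finally show ?thesis .
  qed
  have "Q\<^sup>T * Q = F\<^sup>T * (W\<^sup>T * W) * F"
  proof -
    have "Q\<^sup>T * Q = F\<^sup>T * W\<^sup>T * (W * F)" unfolding QT by (simp add: Q_def)
    also have "\<dots> = F\<^sup>T * (W\<^sup>T * (W * F))" using W F by (intro assoc_mult_mat) auto
    also have "W\<^sup>T * (W * F) = (W\<^sup>T * W) * F" using W F by (intro assoc_mult_mat[symmetric]) auto
    also have "F\<^sup>T * ((W\<^sup>T * W) * F) = F\<^sup>T * (W\<^sup>T * W) * F" using W F by (intro assoc_mult_mat[symmetric]) auto
    finally show ?thesis .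
  qed
  hence QTQ: "Q\<^sup>T * Q = 1\<^sub>m ?n" using W(2) FTF F by simp
  have "Q\<^sup>T * A * Q = F\<^sup>T * B * F"
  proof -
    have "Q\<^sup>T * A * Q = F\<^sup>T * W\<^sup>T * A * (W * F)" unfolding QT by (simp add: Q_def)
    also have "\<dots> = F\<^sup>T * (W\<^sup>T * A * W) * F"
      using W F A by (simp add: assoc_mult_mat[of _ ?n ?n _ ?n _ ?n] mult_carrier_mat[of _ ?n ?n _ ?n])
    finally show ?thesis unfolding B_def .
  qed
  also have "\<dots> = four_block_mat (1\<^sub>m 1 * E * 1\<^sub>m 1) (0\<^sub>m 1 m) (0\<^sub>m m 1) (Q'\<^sup>T * B4 * Q')"
  proof -
    have "F\<^sup>T * B = four_block_mat (1\<^sub>m 1 * E) (0\<^sub>m 1 m) (0\<^sub>m m 1) (Q'\<^sup>T * B4)"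
      unfolding FT Bblock using Q' E B4 by (intro bd_mult[of _ 1 1 _ m m]) auto
    moreover have "four_block_mat (1\<^sub>m 1 * E) (0\<^sub>m 1 m) (0\<^sub>m m 1) (Q'\<^sup>T * B4) * F
      = four_block_mat (1\<^sub>m 1 * E * 1\<^sub>m 1) (0\<^sub>m 1 m) (0\<^sub>m m 1) (Q'\<^sup>T * B4 * Q')"
      unfolding F_def using Q' E B4 by (intro bd_mult[of _ 1 1 _ m m]) auto
    ultimately show ?thesis by simp
  qed
  also have "\<dots> = diagm (e # es')"
  proof (rule eq_matI)
    show "dim_row (four_block_mat (1\<^sub>m 1 * E * 1\<^sub>m 1) (0\<^sub>m 1 m) (0\<^sub>m m 1) (Q'\<^sup>T * B4 * Q')) = dim_row (diagm (e # es'))"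
      using Q' E B4 by (simp add: diagm_def)
    show "dim_col (four_block_mat (1\<^sub>m 1 * E * 1\<^sub>m 1) (0\<^sub>m 1 m) (0\<^sub>m m 1) (Q'\<^sup>T * B4 * Q')) = dim_col (diagm (e # es'))"
      using Q' E B4 by (simp add: diagm_def)
    fix i j assume ij: "i < dim_row (diagm (e # es'))" "j < dim_col (diagm (e # es'))"
    hence ij': "i < ?n" "j < ?n" using Q' by (auto simp: diagm_def)
    have E1: "1\<^sub>m 1 * E * 1\<^sub>m 1 = E" using E by simp
    show "four_block_mat (1\<^sub>m 1 * E * 1\<^sub>m 1) (0\<^sub>m 1 m) (0\<^sub>m m 1) (Q'\<^sup>T * B4 * Q') $$ (i, j) = diagm (e # es') $$ (i, j)"
      unfolding E1 Q'(4) using ij' Q' E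
      by (cases i; cases j) (auto simp: diagm_def E_def)
  qed
  finally have "Q\<^sup>T * A * Q = diagm (e # es')" .
  thus ?case using Q QTQ Q' by (intro exI[of _ Q] exI[of _ "e # es'"]) auto
qed

lemma ker_exists:
  fixes fs :: "real vec list"
  assumes fs: "set fs \<subseteq> carrier_vec n" and len: "length fs < n"
  shows "\<exists>z \<in> carrier_vec n. z \<noteq> 0\<^sub>v n \<and> (\<forall>f \<in> set fs. f \<bullet> z = 0)"
proof -
  define c where "c = (\<lambda>i. if i < length fs then fs ! i else 0\<^sub>v n)"
  have c: "c \<in> {0..<n} \<rightarrow> carrier_vec n" unfolding c_def using fs nth_mem by fastforce
  define M where "M = mat\<^sub>r n n (\<lambda>i. if i = n - 1 then 0\<^sub>v n else c i)"
  have M: "M \<in> carrier_mat n n" unfolding M_def by simp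
  have "det M = 0" unfolding M_def using len by (intro det_row_0 c) auto
  then obtain z where z: "z \<in> carrier_vec n" "z \<noteq> 0\<^sub>v n" "M *\<^sub>v z = 0\<^sub>v n"
    using det_0_iff_vec_prod_zero_field[OF M] by auto
  have "fs ! i \<bullet> z = 0" if i: "i < length fs" for i
  proof -
    have i2: "i < n" "i \<noteq> n - 1" using i len by auto
    have fi: "fs ! i \<in> carrier_vec n" using fs nth_mem[OF i] by auto
    have "row M i = fs ! i" unfolding M_def c_def using i i2 fi
      by (subst row_mat_of_row_fun) auto
    hence "(M *\<^sub>v z) $ i = fs ! i \<bullet> z" using M i2 by simp
    thus ?thesis using z i2 by simp
  qed
  thus ?thesis using z by (metis in_set_conv_nth)
qed

lemma proots_lin_prod: "proots (\<Prod>a\<leftarrow>es. [:- a, 1:]) = mset (es :: real list)"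
proof (induction es)
  case Nil thus ?case by simp
next
  case (Cons a es)
  have nz: "(\<Prod>a\<leftarrow>es. [:- a, 1:]) \<noteq> (0 :: real poly)"
    by (auto simp: prod_list_zero_iff)
  have e: "(\<Prod>x\<leftarrow>a # es. [:- x, 1:]) = [:- a, 1:] * (\<Prod>x\<leftarrow>es. [:- x, 1:])" by simp
  have "proots ([:- a, 1:] * (\<Prod>x\<leftarrow>es. [:- x, 1:])) = proots [:- a, 1:] + proots (\<Prod>x\<leftarrow>es. [:- x, 1:])"
    by (rule proots_mult) (use nz in auto)
  hence "proots (\<Prod>x\<leftarrow>a # es. [:- x, 1:]) = proots [:- a, 1:] + proots (\<Prod>x\<leftarrow>es. [:- x, 1:])"
    by (simp only: e)
  thus ?case using Cons by (simp add: proots_linear_factor)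
qed

lemma spectral_full:
  fixes A :: "real mat"
  assumes A: "A \<in> carrier_mat n n" and sym: "A\<^sup>T = A"
  shows "\<exists>Q es. Q \<in> carrier_mat n n \<and> Q\<^sup>T * Q = 1\<^sub>m n \<and> Q * Q\<^sup>T = 1\<^sub>m n \<and> length es = n
     \<and> Q\<^sup>T * A * Q = diagm es \<and> eigs_desc A = rev (sort es)"
proof -
  obtain Q es where Q: "Q \<in> carrier_mat n n" "Q\<^sup>T * Q = 1\<^sub>m n" "length es = n" "Q\<^sup>T * A * Q = diagm es"
    using spectral[OF A sym] by blast
  have QQT: "Q * Q\<^sup>T = 1\<^sub>m n" using mat_mult_left_right_inverse[of "Q\<^sup>T" n Q] Q by simp
  have D: "diagm es \<in> carrier_mat n n" using Q by (simp add: diagm_def)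
  have "Q * diagm es * Q\<^sup>T = (Q * Q\<^sup>T) * A * (Q * Q\<^sup>T)"
    unfolding Q(4)[symmetric] using Q(1) A
    by (simp add: assoc_mult_mat[of _ n n _ n _ n] mult_carrier_mat[of _ n n _ n])
  also have "(Q * Q\<^sup>T) * A * (Q * Q\<^sup>T) = A" unfolding QQT using A by simp
  finally have AD: "A = Q * diagm es * Q\<^sup>T" by simp
  have "similar_mat A (diagm es)" unfolding similar_mat_def similar_mat_wit_def Let_def
    using AD Q QQT D A by (intro exI[of _ Q] exI[of _ "Q\<^sup>T"]) auto
  hence "char_poly A = char_poly (diagm es)" by (rule char_poly_similar)
  also have "\<dots> = (\<Prod>a\<leftarrow>diag_mat (diagm es). [:- a, 1:])"
    using D by (intro char_poly_upper_triangular[of _ n]) (auto simp: upper_triangular_def diagm_def)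
  also have "diag_mat (diagm es) = es" by (intro nth_equalityI) (auto simp: diag_mat_def diagm_def)
  finally have "proots (char_poly A) = mset es" using proots_lin_prod by simp
  hence "eigs_desc A = rev (sort es)" unfolding eigs_desc_def by simp
  thus ?thesis using Q QQT by blast
qed

lemma qf_diag:
  fixes A Q :: "real mat"
  assumes A: "A \<in> carrier_mat n n" and Q: "Q \<in> carrier_mat n n" "Q * Q\<^sup>T = 1\<^sub>m n"
    and D: "Q\<^sup>T * A * Q = diagm es" and len: "length es = n" and x: "x \<in> carrier_vec n"
  shows "x \<bullet> (A *\<^sub>v x) = (\<Sum>i<n. es ! i * ((Q\<^sup>T *\<^sub>v x) $ i)\<^sup>2)"
    "x \<bullet> x = (\<Sum>i<n. ((Q\<^sup>T *\<^sub>v x) $ i)\<^sup>2)"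
proof -
  define y where "y = Q\<^sup>T *\<^sub>v x"
  have y: "y \<in> carrier_vec n" unfolding y_def using Q x by simp
  have xy: "x = Q *\<^sub>v y" unfolding y_def using Q x
    by (metis assoc_mult_mat_vec one_mult_mat_vec transpose_carrier_mat)
  have AQ: "A = Q * diagm es * Q\<^sup>T"
  proof -
    have "Q * diagm es * Q\<^sup>T = (Q * Q\<^sup>T) * A * (Q * Q\<^sup>T)"
      unfolding D[symmetric] using Q(1) A
      by (simp add: assoc_mult_mat[of _ n n _ n _ n] mult_carrier_mat[of _ n n _ n])
    also have "(Q * Q\<^sup>T) * A * (Q * Q\<^sup>T) = A" unfolding Q(2) using A by simp
    finally show ?thesis by simp
  qed
  have Dc: "diagm es \<in> carrier_mat n n" using len by (simp add: diagm_def)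
  have "A *\<^sub>v x = Q *\<^sub>v (diagm es *\<^sub>v y)" unfolding AQ y_def using Q Dc x
    by (simp add: assoc_mult_mat_vec[of _ n n _ n])
  hence "x \<bullet> (A *\<^sub>v x) = y \<bullet> (diagm es *\<^sub>v y)"
    using transpose_vec_mult_scalar[of Q n n "diagm es *\<^sub>v y" x] Q Dc y x unfolding y_def by simp
  also have "\<dots> = (\<Sum>i<n. es ! i * (y $ i)\<^sup>2)"
  proof -
    have "(diagm es *\<^sub>v y) $ i = es ! i * y $ i" if i: "i < n" for i
    proof -
      have "(diagm es *\<^sub>v y) $ i = (\<Sum>j<n. (if i = j then es ! i else 0) * y $ j)"
        using i y len by (simp add: diagm_def scalar_prod_def lessThan_atLeast0 row_def)
      also have "\<dots> = (\<Sum>j<n. if j = i then es ! i * y $ i else 0)" by (intro sum.cong) auto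
      also have "\<dots> = es ! i * y $ i" using i by simp
      finally show ?thesis .
    qed
    thus ?thesis using y Dc by (simp add: sprod_sum[of _ n] power2_eq_square mult.left_commute)
  qed
  finally show "x \<bullet> (A *\<^sub>v x) = (\<Sum>i<n. es ! i * ((Q\<^sup>T *\<^sub>v x) $ i)\<^sup>2)" unfolding y_def .
  have "x \<bullet> x = y \<bullet> y"
    using transpose_vec_mult_scalar[of Q n n y x] Q x y xy unfolding y_def by simp
  thus "x \<bullet> x = (\<Sum>i<n. ((Q\<^sup>T *\<^sub>v x) $ i)\<^sup>2)" using y unfolding y_def
    by (simp add: sprod_sum[of _ n] power2_eq_square)
qed

lemma len_filter_eigs:
  assumes "eigs_desc A = rev (sort es)" "length es = n"
  shows "length (filter P (eigs_desc A)) = card {i. i < n \<and> P (es ! i)}"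
proof -
  have "length (filter P (eigs_desc A)) = length (filter P es)" unfolding assms(1)
    by (metis mset_filter mset_rev mset_sort size_mset)
  thus ?thesis using assms(2) by (simp add: length_filter_conv_card)
qed

lemma card_filter_idx: "length (filter P [0..<n]) = card {i. i < n \<and> P i}"
  unfolding length_filter_conv_card by (intro arg_cong[where f=card]) auto

lemma count_lower:
  fixes A L :: "real mat"
  assumes A: "A \<in> carrier_mat n n" and sym: "A\<^sup>T = A" and L: "L \<in> carrier_mat n s" and inj: "inj_mat L"
    and q: "\<And>z. z \<in> carrier_vec s \<Longrightarrow> c * ((L *\<^sub>v z) \<bullet> (L *\<^sub>v z)) \<le> (L *\<^sub>v z) \<bullet> (A *\<^sub>v (L *\<^sub>v z))"
  shows "s \<le> length (filter (\<lambda>e. c \<le> e) (eigs_desc A))"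
proof (rule ccontr)
  assume "\<not> ?thesis"
  hence lt: "length (filter (\<lambda>e. c \<le> e) (eigs_desc A)) < s" by simp
  obtain Q es where Q: "Q \<in> carrier_mat n n" "Q\<^sup>T * Q = 1\<^sub>m n" "Q * Q\<^sup>T = 1\<^sub>m n" "length es = n"
     "Q\<^sup>T * A * Q = diagm es" "eigs_desc A = rev (sort es)"
    using spectral_full[OF A sym] by blast
  define K where "K = filter (\<lambda>i. c \<le> es ! i) [0..<n]"
  have lK: "length K < s" using lt unfolding K_def card_filter_idx len_filter_eigs[OF Q(6) Q(4)] .
  define fs where "fs = map (\<lambda>i. L\<^sup>T *\<^sub>v col Q i) K"
  have fs: "set fs \<subseteq> carrier_vec s" unfolding fs_def using L Q(1) by (auto intro!: mult_mat_vec_carrier[of _ s n])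
  obtain z where z: "z \<in> carrier_vec s" "z \<noteq> 0\<^sub>v s" "\<forall>f\<in>set fs. f \<bullet> z = 0"
    using ker_exists[OF fs] lK unfolding fs_def by auto
  define x where "x = L *\<^sub>v z"
  have x: "x \<in> carrier_vec n" unfolding x_def using L z by simp
  have x0: "x \<noteq> 0\<^sub>v n" using inj z L unfolding inj_mat_def x_def by auto
  have "x \<bullet> x \<noteq> 0" using sprod_self_zero[OF _ x] x0 by blast
  hence xpos: "x \<bullet> x > 0" using self_sprod_nonneg[of x] by simp
  define y where "y = (\<lambda>i. (Q\<^sup>T *\<^sub>v x) $ i)"
  have y0: "y i = 0" if i: "i < n" "c \<le> es ! i" for i
  proof -
    have "y i = col Q i \<bullet> x" unfolding y_def using Q i by simp
    also have "\<dots> = (L\<^sup>T *\<^sub>v col Q i) \<bullet> z" unfolding x_def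
      using transpose_vec_mult_scalar[of L n s z "col Q i"] L z Q i by simp
    also have "\<dots> = 0" using z(3) i unfolding fs_def K_def by auto
    finally show ?thesis .
  qed
  note qd = qf_diag[OF A Q(1) Q(3) Q(5) Q(4) x, folded y_def]
  have "(\<Sum>i<n. es ! i * (y i)\<^sup>2) < (\<Sum>i<n. c * (y i)\<^sup>2)"
  proof (rule sum_strict_mono_ex1)
    show "\<forall>i\<in>{..<n}. es ! i * (y i)\<^sup>2 \<le> c * (y i)\<^sup>2"
    proof
      fix i assume "i \<in> {..<n}"
      thus "es ! i * (y i)\<^sup>2 \<le> c * (y i)\<^sup>2" using y0[of i]
        by (cases "c \<le> es ! i") (auto intro: mult_right_mono)
    qed
    have "\<exists>k\<in>{..<n}. y k \<noteq> 0"
    proof (rule ccontr)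
      assume "\<not> ?thesis"
      hence "x \<bullet> x = 0" using qd(2) by simp
      thus False using xpos by simp
    qed
    then obtain k where k: "k < n" "y k \<noteq> 0" by auto
    hence "es ! k < c" using y0 by force
    hence "es ! k * (y k)\<^sup>2 < c * (y k)\<^sup>2" using k by (intro mult_strict_right_mono) auto
    thus "\<exists>a\<in>{..<n}. es ! a * (y a)\<^sup>2 < c * (y a)\<^sup>2" using k(1) by blast
  qed simp
  hence "x \<bullet> (A *\<^sub>v x) < c * (x \<bullet> x)" unfolding qd by (simp add: sum_distrib_left)
  thus False using q[OF z(1)] unfolding x_def by simp
qed

lemma count_upper:
  fixes A L :: "real mat"
  assumes A: "A \<in> carrier_mat n n" and sym: "A\<^sup>T = A" and L: "L \<in> carrier_mat n s"
    and q: "\<And>x. x \<in> carrier_vec n \<Longrightarrow> L\<^sup>T *\<^sub>v x = 0\<^sub>v s \<Longrightarrow> x \<bullet> (A *\<^sub>v x) \<le> c * (x \<bullet> x)"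
  shows "length (filter (\<lambda>e. c < e) (eigs_desc A)) \<le> s"
proof (rule ccontr)
  assume "\<not> ?thesis"
  hence gt: "s < length (filter (\<lambda>e. c < e) (eigs_desc A))" by simp
  obtain Q es where Q: "Q \<in> carrier_mat n n" "Q\<^sup>T * Q = 1\<^sub>m n" "Q * Q\<^sup>T = 1\<^sub>m n" "length es = n"
     "Q\<^sup>T * A * Q = diagm es" "eigs_desc A = rev (sort es)"
    using spectral_full[OF A sym] by blast
  define K where "K = filter (\<lambda>i. c < es ! i) [0..<n]"
  define K' where "K' = filter (\<lambda>i. \<not> c < es ! i) [0..<n]"
  have lK: "s < length K" using gt unfolding K_def card_filter_idx len_filter_eigs[OF Q(6) Q(4)] .
  have "length K + length K' = n" unfolding K_def K'_def by (simp add: sum_length_filter_compl)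
  hence lK': "s + length K' < n" using lK by simp
  define fs where "fs = map (\<lambda>j. Q\<^sup>T *\<^sub>v col L j) [0..<s] @ map (unit_vec n) K'"
  have fs: "set fs \<subseteq> carrier_vec n" unfolding fs_def using L Q by auto
  obtain y where y: "y \<in> carrier_vec n" "y \<noteq> 0\<^sub>v n" "\<forall>f\<in>set fs. f \<bullet> y = 0"
    using ker_exists[OF fs] lK' unfolding fs_def by auto
  have yK: "y $ i = 0" if i: "i < n" "\<not> c < es ! i" for i
  proof -
    have "unit_vec n i \<in> set fs" unfolding fs_def K'_def using i by auto
    hence "unit_vec n i \<bullet> y = 0" using y by auto
    thus ?thesis using i y by simp
  qed
  define x where "x = Q *\<^sub>v y"
  have x: "x \<in> carrier_vec n" unfolding x_def using Q y by simp
  have yx: "Q\<^sup>T *\<^sub>v x = y" unfolding x_def using Q y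
    by (metis assoc_mult_mat_vec one_mult_mat_vec transpose_carrier_mat)
  have Lx: "L\<^sup>T *\<^sub>v x = 0\<^sub>v s"
  proof (rule eq_vecI)
    fix j assume "j < dim_vec (0\<^sub>v s)"
    hence j: "j < s" by simp
    have "(L\<^sup>T *\<^sub>v x) $ j = col L j \<bullet> x" using L j by simp
    also have "\<dots> = (Q\<^sup>T *\<^sub>v col L j) \<bullet> y" unfolding x_def
      using transpose_vec_mult_scalar[of Q n n y "col L j"] L Q y j by simp
    also have "\<dots> = 0" using y(3) j unfolding fs_def by auto
    finally show "(L\<^sup>T *\<^sub>v x) $ j = 0\<^sub>v s $ j" using j by simp
  qed (use L in simp)
  note qd = qf_diag[OF A Q(1) Q(3) Q(5) Q(4) x, unfolded yx]
  have "(\<Sum>i<n. c * (y $ i)\<^sup>2) < (\<Sum>i<n. es ! i * (y $ i)\<^sup>2)"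
  proof (rule sum_strict_mono_ex1)
    show "\<forall>i\<in>{..<n}. c * (y $ i)\<^sup>2 \<le> es ! i * (y $ i)\<^sup>2"
    proof
      fix i assume "i \<in> {..<n}"
      thus "c * (y $ i)\<^sup>2 \<le> es ! i * (y $ i)\<^sup>2" using yK[of i]
        by (cases "c < es ! i") (auto intro: mult_right_mono)
    qed
    obtain k where k: "k < n" "y $ k \<noteq> 0" using y by (metis eq_vecI carrier_vecD index_zero_vec)
    hence "c < es ! k" using yK by force
    hence "c * (y $ k)\<^sup>2 < es ! k * (y $ k)\<^sup>2" using k by (intro mult_strict_right_mono) auto
    thus "\<exists>a\<in>{..<n}. c * (y $ a)\<^sup>2 < es ! a * (y $ a)\<^sup>2" using k(1) by blast
  qed simp
  hence "c * (x \<bullet> x) < x \<bullet> (A *\<^sub>v x)" unfolding qd by (simp add: sum_distrib_left)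
  thus False using q[OF x Lx] by simp
qed

lemma sorted_desc_nth:
  assumes "i \<le> k" "k < length (rev (sort es))"
  shows "rev (sort es) ! k \<le> rev (sort es) ! (i :: nat)"
proof -
  let ?l = "length es"
  have "rev (sort es) ! k = sort es ! (?l - Suc k)" "rev (sort es) ! i = sort es ! (?l - Suc i)"
    using assms by (auto simp: rev_nth)
  moreover have "sort es ! (?l - Suc k) \<le> sort es ! (?l - Suc i)"
    using assms by (intro sorted_nth_mono) auto
  ultimately show ?thesis by simp
qed

lemma sorted_lower:
  fixes es :: "real list"
  assumes j: "1 \<le> j" "j \<le> length (filter (\<lambda>e. c \<le> e) (rev (sort es)))"
  shows "j \<le> length (rev (sort es))" "c \<le> rev (sort es) ! (j - 1)"
proof -
  let ?L = "rev (sort es)"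
  show jl: "j \<le> length ?L" using j length_filter_le[of _ ?L] by (meson order_trans)
  show "c \<le> ?L ! (j - 1)"
  proof (rule ccontr)
    assume "\<not> ?thesis"
    hence lt: "?L ! (j - 1) < c" by simp
    have "{i. i < length ?L \<and> c \<le> ?L ! i} \<subseteq> {..<j - 1}"
    proof
      fix i assume i: "i \<in> {i. i < length ?L \<and> c \<le> ?L ! i}"
      show "i \<in> {..<j - 1}"
      proof (rule ccontr)
        assume "i \<notin> {..<j - 1}"
        hence "?L ! i \<le> ?L ! (j - 1)" using i by (intro sorted_desc_nth) auto
        thus False using i lt by simp
      qed
    qed
    hence "card {i. i < length ?L \<and> c \<le> ?L ! i} \<le> j - 1"
      by (metis card_lessThan card_mono finite_lessThan)
    thus False using j by (simp add: length_filter_conv_card)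
  qed
qed

lemma sorted_upper:
  fixes es :: "real list"
  assumes s: "length (filter (\<lambda>e. c < e) (rev (sort es))) \<le> s" "s < length (rev (sort es))"
  shows "rev (sort es) ! s \<le> c"
proof (rule ccontr)
  let ?L = "rev (sort es)"
  assume "\<not> ?thesis"
  hence gt: "c < ?L ! s" by simp
  have "{..s} \<subseteq> {i. i < length ?L \<and> c < ?L ! i}"
  proof
    fix i assume "i \<in> {..s}"
    hence "?L ! s \<le> ?L ! i" "i < length ?L" using s by (auto intro: sorted_desc_nth)
    thus "i \<in> {i. i < length ?L \<and> c < ?L ! i}" using gt by auto
  qed
  hence "card {..s} \<le> card {i. i < length ?L \<and> c < ?L ! i}" by (intro card_mono) auto
  thus False using s by (simp add: length_filter_conv_card)
qed

lemma qf_entry: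
  fixes M :: "real mat"
  assumes M: "M \<in> carrier_mat n n" and x: "x \<in> carrier_vec n"
  shows "x \<bullet> (M *\<^sub>v x) = (\<Sum>i<n. \<Sum>j<n. x $ i * M $$ (i,j) * x $ j)"
proof -
  have "x \<bullet> (M *\<^sub>v x) = (\<Sum>i<n. x $ i * (M *\<^sub>v x) $ i)" using M x by (simp add: sprod_sum[of _ n])
  also have "\<dots> = (\<Sum>i<n. x $ i * (\<Sum>j<n. M $$ (i,j) * x $ j))"
    using M x by (intro sum.cong refl) (simp add: sprod_sum[of _ n])
  also have "\<dots> = (\<Sum>i<n. \<Sum>j<n. x $ i * M $$ (i,j) * x $ j)"
    by (simp add: sum_distrib_left mult.assoc)
  finally show ?thesis .
qed

lemma qf_add:
  fixes M1 M2 :: "real mat"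
  assumes "M1 \<in> carrier_mat n n" "M2 \<in> carrier_mat n n" "x \<in> carrier_vec n"
  shows "x \<bullet> ((M1 + M2) *\<^sub>v x) = x \<bullet> (M1 *\<^sub>v x) + x \<bullet> (M2 *\<^sub>v x)"
  using assms by (simp add: add_mult_distrib_mat_vec[of _ n n] scalar_prod_add_distrib[of _ n])

lemma qf_minus:
  fixes M1 M2 :: "real mat"
  assumes "M1 \<in> carrier_mat n n" "M2 \<in> carrier_mat n n" "x \<in> carrier_vec n"
  shows "x \<bullet> ((M1 - M2) *\<^sub>v x) = x \<bullet> (M1 *\<^sub>v x) - x \<bullet> (M2 *\<^sub>v x)"
  using assms by (simp add: minus_mult_distrib_mat_vec[of _ n n] scalar_prod_minus_distrib[of _ n])

lemma qf_smult:
  fixes M :: "real mat"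
  assumes "M \<in> carrier_mat n n" "x \<in> carrier_vec n"
  shows "x \<bullet> ((a \<cdot>\<^sub>m M) *\<^sub>v x) = a * (x \<bullet> (M *\<^sub>v x))"
  using assms by (simp add: qf_entry[of _ n] sum_distrib_left mult.commute mult.left_commute)

lemma wsum_carrier: "wsum N A c M \<in> carrier_mat N N" unfolding wsum_def by simp

lemma qf_wsum:
  assumes A: "finite A" and M: "\<And>k. k \<in> A \<Longrightarrow> M k \<in> carrier_mat N N" and x: "x \<in> carrier_vec N"
  shows "x \<bullet> (wsum N A c M *\<^sub>v x) = (\<Sum>k\<in>A. c k * (x \<bullet> (M k *\<^sub>v x)))"
proof -
  have "x \<bullet> (wsum N A c M *\<^sub>v x) = (\<Sum>i<N. \<Sum>j<N. x $ i * (\<Sum>k\<in>A. c k * M k $$ (i,j)) * x $ j)"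
    unfolding qf_entry[OF wsum_carrier x] by (intro sum.cong refl) (simp add: wsum_def)
  also have "\<dots> = (\<Sum>i<N. \<Sum>j<N. \<Sum>k\<in>A. c k * (x $ i * M k $$ (i,j) * x $ j))"
    by (simp add: sum_distrib_left sum_distrib_right mult.commute mult.left_commute)
  also have "\<dots> = (\<Sum>k\<in>A. \<Sum>i<N. \<Sum>j<N. c k * (x $ i * M k $$ (i,j) * x $ j))"
    by (simp add: sum.swap[of _ A])
  also have "\<dots> = (\<Sum>k\<in>A. c k * (x \<bullet> (M k *\<^sub>v x)))"
    using M x by (intro sum.cong refl) (simp add: qf_entry[of _ N] sum_distrib_left)
  finally show ?thesis .
qed

lemma qf_spec:
  fixes M :: "real mat"
  assumes M: "M \<in> carrier_mat n n" and x: "x \<in> carrier_vec n"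
  shows "x \<bullet> (M *\<^sub>v x) \<le> spec_norm M * (x \<bullet> x)"
proof -
  have "x \<bullet> (M *\<^sub>v x) \<le> vnorm x * vnorm (M *\<^sub>v x)" using vec_cs[of x n "M *\<^sub>v x"] M x by simp
  also have "\<dots> \<le> vnorm x * (spec_norm M * vnorm x)"
    using spec_norm_bound[OF M x] vnorm_nonneg[of x] by (intro mult_left_mono) auto
  also have "\<dots> = spec_norm M * (x \<bullet> x)" using vnorm_sq[of x] by (simp add: power2_eq_square)
  finally show ?thesis .
qed

lemma qf_frob:
  fixes M :: "real mat"
  assumes M: "M \<in> carrier_mat n n" and x: "x \<in> carrier_vec n"
  shows "\<bar>x \<bullet> (M *\<^sub>v x)\<bar> \<le> frob_norm M * (x \<bullet> x)"
proof -
  have "\<bar>x \<bullet> (M *\<^sub>v x)\<bar> \<le> vnorm x * vnorm (M *\<^sub>v x)" using vec_cs[of x n "M *\<^sub>v x"] M x by simp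
  also have "\<dots> \<le> vnorm x * (frob_norm M * vnorm x)"
    using mat_vec_frob[OF M x] vnorm_nonneg[of x] by (intro mult_left_mono) auto
  also have "\<dots> = frob_norm M * (x \<bullet> x)" using vnorm_sq[of x] by (simp add: power2_eq_square)
  finally show ?thesis .
qed

lemma proj_pair:
  fixes L1 L2 :: "real mat"
  assumes L1: "L1 \<in> carrier_mat N a" and L2: "L2 \<in> carrier_mat N b"
    and inj: "inj_mat (four_block_mat L1 L2 (0\<^sub>m 0 a) (0\<^sub>m 0 b))" and o: "L1\<^sup>T * L2 = 0\<^sub>m a b"
    and x: "x \<in> carrier_vec N"
  shows "0 \<le> x \<bullet> (proj L1 *\<^sub>v x)" "0 \<le> x \<bullet> (proj L2 *\<^sub>v x)"
    "x \<bullet> ((proj L1 + proj L2) *\<^sub>v x) \<le> x \<bullet> x"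
    "proj L1 \<in> carrier_mat N N" "proj L2 \<in> carrier_mat N N" "inj_mat L1"
proof -
  note i = inj_block[OF L1 L2 inj]
  note p1 = proj_props[OF L1 i(1)] and p2 = proj_props[OF L2 i(2)]
  show "0 \<le> x \<bullet> (proj L1 *\<^sub>v x)" using idem_bounds(1)[OF p1(1) p1(2) p1(3) x] .
  show "0 \<le> x \<bullet> (proj L2 *\<^sub>v x)" using idem_bounds(1)[OF p2(1) p2(2) p2(3) x] .
  show "proj L1 \<in> carrier_mat N N" "proj L2 \<in> carrier_mat N N" "inj_mat L1" using p1 p2 i by auto
  let ?P = "proj L1" and ?R = "proj L2"
  have PR: "?P * ?R = 0\<^sub>m N N" by (rule proj_orth[OF L1 L2 i o])
  have RP: "?R * ?P = 0\<^sub>m N N"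
  proof -
    have "(?P * ?R)\<^sup>T = ?R\<^sup>T * ?P\<^sup>T" using p1 p2 by (intro transpose_mult) auto
    thus ?thesis using PR p1 p2 by simp
  qed
  have S: "?P + ?R \<in> carrier_mat N N" using p1 p2 by simp
  have ST: "(?P + ?R)\<^sup>T = ?P + ?R" using p1 p2 by (simp add: transpose_add)
  have SS: "(?P + ?R) * (?P + ?R) = ?P + ?R"
  proof -
    have "(?P + ?R) * (?P + ?R) = ?P * ?P + ?R * ?P + (?P * ?R + ?R * ?R)"
      using p1(1) p2(1) by (simp add: add_mult_distrib_mat[of _ N N] mult_add_distrib_mat[of _ N N])
    thus ?thesis using p1 p2 PR RP by simp
  qed
  show "x \<bullet> ((?P + ?R) *\<^sub>v x) \<le> x \<bullet> x" using idem_bounds(2)[OF S ST SS x] .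
qed

theorem theorem4:
  fixes s r0 :: nat and r :: "'k \<Rightarrow> nat" and \<A> :: "'k set" and \<kappa> :: real
  assumes "finite \<A>" and "\<kappa> > 0" and "s \<le> r0" and "\<forall>k\<in>\<A>. s \<le> r k"
  shows "\<exists>C>0. \<forall>(N::nat) (T0::real) (Tk::'k \<Rightarrow> real) (Lw0::real mat) (Ls0::real mat)
            (LT::'k \<Rightarrow> real mat) (LTc::'k \<Rightarrow> real mat) (\<epsilon>::real).
      ( T0 > 0 \<and> (\<forall>k\<in>\<A>. Tk k > 0)
      \<and> Lw0 \<in> carrier_mat N s \<and> Ls0 \<in> carrier_mat N (r0 - s)
      \<and> full_col_rank (four_block_mat Lw0 Ls0 (0\<^sub>m 0 s) (0\<^sub>m 0 (r0 - s)))
      \<and> Lw0\<^sup>T * Ls0 = 0\<^sub>m s (r0 - s)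
      \<and> (\<forall>k\<in>\<A>. LT k \<in> carrier_mat N s \<and> LTc k \<in> carrier_mat N (r k - s)
            \<and> full_col_rank (four_block_mat (LT k) (LTc k) (0\<^sub>m 0 s) (0\<^sub>m 0 (r k - s)))
            \<and> (LT k)\<^sup>T * LTc k = 0\<^sub>m s (r k - s))
      \<and> 0 \<le> \<epsilon>
      \<and> (\<forall>k\<in>\<A>. frob_norm (proj (LT k) - proj Lw0) \<le> \<epsilon>)
      \<and> (let T = T0 + (\<Sum>k\<in>\<A>. Tk k) in
           spec_norm ((1 / T) \<cdot>\<^sub>m (T0 \<cdot>\<^sub>m proj Ls0 + wsum N \<A> Tk (\<lambda>k. proj (LTc k)))) \<le> 1 - \<kappa>) )
      \<longrightarrow>
      (let T = T0 + (\<Sum>k\<in>\<A>. Tk k);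
           Pw = (1 / T) \<cdot>\<^sub>m (T0 \<cdot>\<^sub>m (proj Lw0 + proj Ls0)
                   + wsum N \<A> Tk (\<lambda>k. proj (LT k) + proj (LTc k)))
       in (\<forall>j\<in>{1..s}. \<bar>lambda j Pw - 1\<bar> \<le> C * \<epsilon>)
          \<and> (s < N \<longrightarrow> lambda (s + 1) Pw \<le> 1 - \<kappa> + C * \<epsilon>))"
proof (intro exI[of _ "1::real"] conjI allI impI)
  show "(0::real) < 1" by simp
  fix N :: nat and T0 :: real and Tk :: "'k \<Rightarrow> real" and Lw0 Ls0 :: "real mat"
    and LT LTc :: "'k \<Rightarrow> real mat" and \<epsilon> :: real
  assume H: "T0 > 0 \<and> (\<forall>k\<in>\<A>. Tk k > 0)
      \<and> Lw0 \<in> carrier_mat N s \<and> Ls0 \<in> carrier_mat N (r0 - s)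
      \<and> full_col_rank (four_block_mat Lw0 Ls0 (0\<^sub>m 0 s) (0\<^sub>m 0 (r0 - s)))
      \<and> Lw0\<^sup>T * Ls0 = 0\<^sub>m s (r0 - s)
      \<and> (\<forall>k\<in>\<A>. LT k \<in> carrier_mat N s \<and> LTc k \<in> carrier_mat N (r k - s)
            \<and> full_col_rank (four_block_mat (LT k) (LTc k) (0\<^sub>m 0 s) (0\<^sub>m 0 (r k - s)))
            \<and> (LT k)\<^sup>T * LTc k = 0\<^sub>m s (r k - s))
      \<and> 0 \<le> \<epsilon>
      \<and> (\<forall>k\<in>\<A>. frob_norm (proj (LT k) - proj Lw0) \<le> \<epsilon>)
      \<and> (let T = T0 + (\<Sum>k\<in>\<A>. Tk k) in
           spec_norm ((1 / T) \<cdot>\<^sub>m (T0 \<cdot>\<^sub>m proj Ls0 + wsum N \<A> Tk (\<lambda>k. proj (LTc k)))) \<le> 1 - \<kappa>)"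
  have fin: "finite \<A>" using assms(1) .
  have T0: "T0 > 0" using H by blast
  have Tkp: "\<And>k. k \<in> \<A> \<Longrightarrow> Tk k > 0" using H by blast
  have Lw0: "Lw0 \<in> carrier_mat N s" using H by blast
  have Ls0: "Ls0 \<in> carrier_mat N (r0 - s)" using H by blast
  have fcr0: "full_col_rank (four_block_mat Lw0 Ls0 (0\<^sub>m 0 s) (0\<^sub>m 0 (r0 - s)))" using H by blast
  have o0: "Lw0\<^sup>T * Ls0 = 0\<^sub>m s (r0 - s)" using H by blast
  have LTk: "\<And>k. k \<in> \<A> \<Longrightarrow> LT k \<in> carrier_mat N s \<and> LTc k \<in> carrier_mat N (r k - s)
            \<and> full_col_rank (four_block_mat (LT k) (LTc k) (0\<^sub>m 0 s) (0\<^sub>m 0 (r k - s)))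
            \<and> (LT k)\<^sup>T * LTc k = 0\<^sub>m s (r k - s)" using H by blast
  have eps: "0 \<le> \<epsilon>" using H by blast
  have frob: "\<And>k. k \<in> \<A> \<Longrightarrow> frob_norm (proj (LT k) - proj Lw0) \<le> \<epsilon>" using H by blast
  define T where "T = T0 + (\<Sum>k\<in>\<A>. Tk k)"
  have spec: "spec_norm ((1 / T) \<cdot>\<^sub>m (T0 \<cdot>\<^sub>m proj Ls0 + wsum N \<A> Tk (\<lambda>k. proj (LTc k)))) \<le> 1 - \<kappa>"
    using H unfolding T_def Let_def by blast
  define Pw where "Pw = (1 / T) \<cdot>\<^sub>m (T0 \<cdot>\<^sub>m (proj Lw0 + proj Ls0)
                   + wsum N \<A> Tk (\<lambda>k. proj (LT k) + proj (LTc k)))"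
  define Qm where "Qm = (1 / T) \<cdot>\<^sub>m (T0 \<cdot>\<^sub>m proj Ls0 + wsum N \<A> Tk (\<lambda>k. proj (LTc k)))"
  have sumT: "0 \<le> (\<Sum>k\<in>\<A>. Tk k)" using Tkp by (intro sum_nonneg) (auto intro: less_imp_le)
  have Tpos: "T > 0" unfolding T_def using T0 sumT by simp
  have inj0: "inj_mat (four_block_mat Lw0 Ls0 (0\<^sub>m 0 s) (0\<^sub>m 0 (r0 - s)))"
    by (rule fcr_inj[OF _ fcr0]) (use Lw0 Ls0 in auto)
  have injk: "inj_mat (four_block_mat (LT k) (LTc k) (0\<^sub>m 0 s) (0\<^sub>m 0 (r k - s)))" if k: "k \<in> \<A>" for k
    by (rule fcr_inj[of _ N "s + (r k - s)"]) (use LTk[OF k] in auto)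
  note pp0 = proj_pair[OF Lw0 Ls0 inj0 o0]
  have ppk: "0 \<le> x \<bullet> (proj (LT k) *\<^sub>v x)" "0 \<le> x \<bullet> (proj (LTc k) *\<^sub>v x)"
    "x \<bullet> ((proj (LT k) + proj (LTc k)) *\<^sub>v x) \<le> x \<bullet> x"
    "proj (LT k) \<in> carrier_mat N N" "proj (LTc k) \<in> carrier_mat N N"
    if k: "k \<in> \<A>" and x: "x \<in> carrier_vec N" for k and x :: "real vec"
    using proj_pair[of "LT k" N s "LTc k" "r k - s", OF _ _ injk[OF k] _ x] LTk[OF k] by auto
  have P0w: "proj Lw0 \<in> carrier_mat N N" and P0s: "proj Ls0 \<in> carrier_mat N N"
    using pp0(4,5)[of "0\<^sub>v N"] by auto
  have PTc: "proj (LT k) \<in> carrier_mat N N" "proj (LTc k) \<in> carrier_mat N N" if "k \<in> \<A>" for k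
    using ppk(4,5)[OF that, of "0\<^sub>v N"] by auto
  have injLw0: "inj_mat Lw0" using pp0(6)[of "0\<^sub>v N"] by simp
  have qPw: "x \<bullet> (Pw *\<^sub>v x) = (1 / T) * (T0 * (x \<bullet> (proj Lw0 *\<^sub>v x) + x \<bullet> (proj Ls0 *\<^sub>v x))
      + (\<Sum>k\<in>\<A>. Tk k * (x \<bullet> (proj (LT k) *\<^sub>v x) + x \<bullet> (proj (LTc k) *\<^sub>v x))))"
    if x: "x \<in> carrier_vec N" for x
  proof -
    have c1: "T0 \<cdot>\<^sub>m (proj Lw0 + proj Ls0) \<in> carrier_mat N N" using P0w P0s by simp
    have c2: "wsum N \<A> Tk (\<lambda>k. proj (LT k) + proj (LTc k)) \<in> carrier_mat N N" by (rule wsum_carrier)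
    have "x \<bullet> (Pw *\<^sub>v x) = (1 / T) * (x \<bullet> ((T0 \<cdot>\<^sub>m (proj Lw0 + proj Ls0)
                   + wsum N \<A> Tk (\<lambda>k. proj (LT k) + proj (LTc k))) *\<^sub>v x))"
      unfolding Pw_def using c1 c2 x by (intro qf_smult) auto
    also have "\<dots> = (1 / T) * (T0 * (x \<bullet> ((proj Lw0 + proj Ls0) *\<^sub>v x))
       + (\<Sum>k\<in>\<A>. Tk k * (x \<bullet> ((proj (LT k) + proj (LTc k)) *\<^sub>v x))))"
      using c1 c2 x P0w P0s PTc by (simp add: qf_add[of _ N] qf_smult[of _ N] qf_wsum[OF fin])
    also have "\<dots> = (1 / T) * (T0 * (x \<bullet> (proj Lw0 *\<^sub>v x) + x \<bullet> (proj Ls0 *\<^sub>v x))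
      + (\<Sum>k\<in>\<A>. Tk k * (x \<bullet> (proj (LT k) *\<^sub>v x) + x \<bullet> (proj (LTc k) *\<^sub>v x))))"
      using x P0w P0s PTc by (simp add: qf_add[of _ N] cong: sum.cong)
    finally show ?thesis .
  qed
  have qQm: "x \<bullet> (Qm *\<^sub>v x) = (1 / T) * (T0 * (x \<bullet> (proj Ls0 *\<^sub>v x))
      + (\<Sum>k\<in>\<A>. Tk k * (x \<bullet> (proj (LTc k) *\<^sub>v x))))"
    if x: "x \<in> carrier_vec N" for x
  proof -
    have c1: "T0 \<cdot>\<^sub>m proj Ls0 \<in> carrier_mat N N" using P0s by simp
    have c2: "wsum N \<A> Tk (\<lambda>k. proj (LTc k)) \<in> carrier_mat N N" by (rule wsum_carrier)
    have "x \<bullet> (Qm *\<^sub>v x) = (1 / T) * (x \<bullet> ((T0 \<cdot>\<^sub>m proj Ls0 + wsum N \<A> Tk (\<lambda>k. proj (LTc k))) *\<^sub>v x))"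
      unfolding Qm_def using c1 c2 x by (intro qf_smult) auto
    also have "\<dots> = (1 / T) * (T0 * (x \<bullet> (proj Ls0 *\<^sub>v x)) + (\<Sum>k\<in>\<A>. Tk k * (x \<bullet> (proj (LTc k) *\<^sub>v x))))"
      using c1 c2 x P0s PTc by (simp add: qf_add[of _ N] qf_smult[of _ N] qf_wsum[OF fin])
    finally show ?thesis .
  qed
  have Qmb: "x \<bullet> (Qm *\<^sub>v x) \<le> (1 - \<kappa>) * (x \<bullet> x)" if x: "x \<in> carrier_vec N" for x
  proof -
    have "Qm \<in> carrier_mat N N" unfolding Qm_def using P0s by (simp add: wsum_carrier)
    hence "x \<bullet> (Qm *\<^sub>v x) \<le> spec_norm Qm * (x \<bullet> x)" using x by (rule qf_spec)
    also have "\<dots> \<le> (1 - \<kappa>) * (x \<bullet> x)" using spec self_sprod_nonneg[of x] unfolding Qm_def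
      by (intro mult_right_mono) auto
    finally show ?thesis .
  qed
  have Pwc: "Pw \<in> carrier_mat N N" unfolding Pw_def using P0w P0s by (simp add: wsum_carrier)
  have PwT: "Pw\<^sup>T = Pw"
  proof (rule eq_matI)
    fix i j assume "i < dim_row Pw" "j < dim_col Pw"
    hence ij: "i < N" "j < N" using Pwc by auto
    have s0: "proj Lw0 $$ (j, i) = proj Lw0 $$ (i, j)" "proj Ls0 $$ (j, i) = proj Ls0 $$ (i, j)"
      using sym_entry[OF proj_props(2)[OF Lw0 injLw0] P0w ij] sym_entry[OF proj_props(2)[OF Ls0] P0s ij]
        inj_block[OF Lw0 Ls0 inj0] by auto
    have sk: "(proj (LT k) + proj (LTc k)) $$ (j, i) = (proj (LT k) + proj (LTc k)) $$ (i, j)"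
      if k: "k \<in> \<A>" for k
    proof -
      note ib = inj_block[of "LT k" N s "LTc k" "r k - s", OF _ _ injk[OF k]]
      have "proj (LT k) $$ (j, i) + proj (LTc k) $$ (j, i) = proj (LT k) $$ (i, j) + proj (LTc k) $$ (i, j)"
        using sym_entry[OF proj_props(2)[of "LT k" N s] PTc(1)[OF k] ij]
          sym_entry[OF proj_props(2)[of "LTc k" N "r k - s"] PTc(2)[OF k] ij] ib LTk[OF k] by auto
      thus ?thesis using PTc[OF k] ij by simp
    qed
    show "Pw\<^sup>T $$ (i, j) = Pw $$ (i, j)"
      using ij P0w P0s sk s0 unfolding Pw_def by (simp add: wsum_def cong: sum.cong)
  qed (use Pwc in auto)
  have xx0: "\<And>x :: real vec. 0 \<le> x \<bullet> x" by (rule self_sprod_nonneg)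
  have up1: "length (filter (\<lambda>e. 1 < e) (eigs_desc Pw)) \<le> 0"
  proof (rule count_upper[OF Pwc PwT, of "0\<^sub>m N 0"])
    fix x :: "real vec" assume x: "x \<in> carrier_vec N"
    have "T0 * (x \<bullet> (proj Lw0 *\<^sub>v x) + x \<bullet> (proj Ls0 *\<^sub>v x)) \<le> T0 * (x \<bullet> x)"
      using pp0(3)[OF x] qf_add[OF P0w P0s x] T0 by (intro mult_left_mono) auto
    moreover have "(\<Sum>k\<in>\<A>. Tk k * (x \<bullet> (proj (LT k) *\<^sub>v x) + x \<bullet> (proj (LTc k) *\<^sub>v x)))
        \<le> (\<Sum>k\<in>\<A>. Tk k * (x \<bullet> x))"
      using ppk(3)[OF _ x] qf_add[OF PTc(1) PTc(2) x] Tkp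
      by (intro sum_mono mult_left_mono) (auto intro: less_imp_le)
    ultimately have "T0 * (x \<bullet> (proj Lw0 *\<^sub>v x) + x \<bullet> (proj Ls0 *\<^sub>v x))
      + (\<Sum>k\<in>\<A>. Tk k * (x \<bullet> (proj (LT k) *\<^sub>v x) + x \<bullet> (proj (LTc k) *\<^sub>v x))) \<le> T * (x \<bullet> x)"
      unfolding T_def by (simp add: sum_distrib_right distrib_right)
    thus "x \<bullet> (Pw *\<^sub>v x) \<le> 1 * (x \<bullet> x)" unfolding qPw[OF x] using Tpos
      by (simp add: divide_le_eq mult.commute)
  qed auto
  have le1: "e \<le> 1" if "e \<in> set (eigs_desc Pw)" for e
    using up1 that by (auto simp: filter_empty_conv)
  obtain Q es where Q: "length es = N" "eigs_desc Pw = rev (sort es)"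
    using spectral_full[OF Pwc PwT] by blast
  have lo: "s \<le> length (filter (\<lambda>e. 1 - \<epsilon> \<le> e) (eigs_desc Pw))"
  proof (rule count_lower[OF Pwc PwT Lw0 injLw0])
    fix z :: "real vec" assume z: "z \<in> carrier_vec s"
    define x where "x = Lw0 *\<^sub>v z"
    have x: "x \<in> carrier_vec N" unfolding x_def using Lw0 z by simp
    have Px: "proj Lw0 *\<^sub>v x = x" unfolding x_def
      using proj_props(4)[OF Lw0 injLw0] Lw0 z P0w by (metis assoc_mult_mat_vec)
    have w0: "x \<bullet> (proj Lw0 *\<^sub>v x) = x \<bullet> x" using Px by simp
    have tk: "(1 - \<epsilon>) * (x \<bullet> x) \<le> x \<bullet> (proj (LT k) *\<^sub>v x)" if k: "k \<in> \<A>" for k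
    proof -
      have "x \<bullet> ((proj (LT k) - proj Lw0) *\<^sub>v x) = x \<bullet> (proj (LT k) *\<^sub>v x) - x \<bullet> x"
        using qf_minus[OF PTc(1)[OF k] P0w x] w0 by simp
      moreover have "\<bar>x \<bullet> ((proj (LT k) - proj Lw0) *\<^sub>v x)\<bar> \<le> \<epsilon> * (x \<bullet> x)"
      proof -
        have "\<bar>x \<bullet> ((proj (LT k) - proj Lw0) *\<^sub>v x)\<bar> \<le> frob_norm (proj (LT k) - proj Lw0) * (x \<bullet> x)"
          using PTc(1)[OF k] P0w x by (intro qf_frob) auto
        also have "\<dots> \<le> \<epsilon> * (x \<bullet> x)" using frob[OF k] xx0[of x] by (intro mult_right_mono) auto
        finally show ?thesis .
      qed
      ultimately show ?thesis by (simp add: algebra_simps abs_le_iff)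
    qed
    have "T0 * ((1 - \<epsilon>) * (x \<bullet> x)) \<le> T0 * (x \<bullet> (proj Lw0 *\<^sub>v x) + x \<bullet> (proj Ls0 *\<^sub>v x))"
      using w0 pp0(2)[OF x] T0 eps xx0[of x] by (intro mult_left_mono) (auto simp: algebra_simps mult_nonneg_nonneg)
    moreover have "(\<Sum>k\<in>\<A>. Tk k * ((1 - \<epsilon>) * (x \<bullet> x)))
        \<le> (\<Sum>k\<in>\<A>. Tk k * (x \<bullet> (proj (LT k) *\<^sub>v x) + x \<bullet> (proj (LTc k) *\<^sub>v x)))"
      using tk ppk(2)[OF _ x] Tkp by (intro sum_mono mult_left_mono) (auto intro: less_imp_le add_increasing2)
    ultimately have "T * ((1 - \<epsilon>) * (x \<bullet> x)) \<le> T0 * (x \<bullet> (proj Lw0 *\<^sub>v x) + x \<bullet> (proj Ls0 *\<^sub>v x))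
      + (\<Sum>k\<in>\<A>. Tk k * (x \<bullet> (proj (LT k) *\<^sub>v x) + x \<bullet> (proj (LTc k) *\<^sub>v x)))"
      unfolding T_def by (simp add: sum_distrib_right distrib_right)
    thus "(1 - \<epsilon>) * ((Lw0 *\<^sub>v z) \<bullet> (Lw0 *\<^sub>v z)) \<le> (Lw0 *\<^sub>v z) \<bullet> (Pw *\<^sub>v (Lw0 *\<^sub>v z))"
      unfolding x_def[symmetric] qPw[OF x] using Tpos by (simp add: le_divide_eq mult.commute)
  qed
  have hi: "length (filter (\<lambda>e. 1 - \<kappa> + \<epsilon> < e) (eigs_desc Pw)) \<le> s"
  proof (rule count_upper[OF Pwc PwT Lw0])
    fix x :: "real vec" assume x: "x \<in> carrier_vec N" and Lx: "Lw0\<^sup>T *\<^sub>v x = 0\<^sub>v s"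
    have w0: "x \<bullet> (proj Lw0 *\<^sub>v x) = 0" using proj_props(5)[OF Lw0 injLw0 x Lx] x by simp
    have tk: "x \<bullet> (proj (LT k) *\<^sub>v x) \<le> \<epsilon> * (x \<bullet> x)" if k: "k \<in> \<A>" for k
    proof -
      have "x \<bullet> ((proj (LT k) - proj Lw0) *\<^sub>v x) = x \<bullet> (proj (LT k) *\<^sub>v x)"
        using qf_minus[OF PTc(1)[OF k] P0w x] w0 by simp
      moreover have "\<bar>x \<bullet> ((proj (LT k) - proj Lw0) *\<^sub>v x)\<bar> \<le> frob_norm (proj (LT k) - proj Lw0) * (x \<bullet> x)"
        using PTc(1)[OF k] P0w x by (intro qf_frob) auto
      moreover have "frob_norm (proj (LT k) - proj Lw0) * (x \<bullet> x) \<le> \<epsilon> * (x \<bullet> x)"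
        using frob[OF k] xx0[of x] by (intro mult_right_mono) auto
      ultimately show ?thesis by simp
    qed
    have "(\<Sum>k\<in>\<A>. Tk k * (x \<bullet> (proj (LT k) *\<^sub>v x))) \<le> (\<Sum>k\<in>\<A>. Tk k * (\<epsilon> * (x \<bullet> x)))"
      using tk Tkp by (intro sum_mono mult_left_mono) (auto intro: less_imp_le)
    also have "\<dots> = (\<Sum>k\<in>\<A>. Tk k) * (\<epsilon> * (x \<bullet> x))" by (simp add: sum_distrib_right)
    also have "\<dots> \<le> T * (\<epsilon> * (x \<bullet> x))" unfolding T_def using T0 eps xx0[of x]
      by (intro mult_right_mono) auto
    finally have A1: "(1 / T) * (T0 * (x \<bullet> (proj Lw0 *\<^sub>v x)) + (\<Sum>k\<in>\<A>. Tk k * (x \<bullet> (proj (LT k) *\<^sub>v x))))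
        \<le> \<epsilon> * (x \<bullet> x)" using w0 Tpos by (simp add: divide_le_eq mult.commute)
    have "x \<bullet> (Pw *\<^sub>v x) = (1 / T) * (T0 * (x \<bullet> (proj Lw0 *\<^sub>v x)) + (\<Sum>k\<in>\<A>. Tk k * (x \<bullet> (proj (LT k) *\<^sub>v x))))
        + x \<bullet> (Qm *\<^sub>v x)"
      unfolding qPw[OF x] qQm[OF x] by (simp add: algebra_simps sum.distrib)
    also have "\<dots> \<le> \<epsilon> * (x \<bullet> x) + (1 - \<kappa>) * (x \<bullet> x)" using A1 Qmb[OF x] by simp
    finally show "x \<bullet> (Pw *\<^sub>v x) \<le> (1 - \<kappa> + \<epsilon>) * (x \<bullet> x)" by (simp add: algebra_simps)
  qed
  show "let T = T0 + (\<Sum>k\<in>\<A>. Tk k);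
           Pw = (1 / T) \<cdot>\<^sub>m (T0 \<cdot>\<^sub>m (proj Lw0 + proj Ls0)
                   + wsum N \<A> Tk (\<lambda>k. proj (LT k) + proj (LTc k)))
       in (\<forall>j\<in>{1..s}. \<bar>lambda j Pw - 1\<bar> \<le> 1 * \<epsilon>)
          \<and> (s < N \<longrightarrow> lambda (s + 1) Pw \<le> 1 - \<kappa> + 1 * \<epsilon>)"
    unfolding Let_def T_def[symmetric] Pw_def[symmetric]
  proof (intro conjI ballI impI)
    fix j assume j: "j \<in> {1..s}"
    have jj: "1 \<le> j" "j \<le> length (filter (\<lambda>e. 1 - \<epsilon> \<le> e) (rev (sort es)))" using j lo Q(2) by auto
    note sl = sorted_lower[OF jj]
    have "j - 1 < length (rev (sort es))" using sl(1) jj(1) by linarith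
    hence "rev (sort es) ! (j - 1) \<in> set (rev (sort es))" by (rule nth_mem)
    hence "rev (sort es) ! (j - 1) \<in> set (eigs_desc Pw)" using Q(2) by simp
    hence "lambda j Pw \<le> 1" using le1 Q(2) unfolding lambda_def by auto
    moreover have "1 - \<epsilon> \<le> lambda j Pw" using sl(2) Q(2) unfolding lambda_def by simp
    ultimately show "\<bar>lambda j Pw - 1\<bar> \<le> 1 * \<epsilon>" by simp
  next
    assume sN: "s < N"
    have "rev (sort es) ! s \<le> 1 - \<kappa> + \<epsilon>"
      using sorted_upper[of "1 - \<kappa> + \<epsilon>" es s] hi Q sN by simp
    thus "lambda (s + 1) Pw \<le> 1 - \<kappa> + 1 * \<epsilon>" using Q(2) unfolding lambda_def by simp
  qed
qed

end
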